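(* Let $n\geqslant 2$, $k\in\{1,2,\dots,2^n-1\}$ and let $\ket{\psi}$ be an $n$-qubit state with $\braket{i}{\psi}=0$ for $i\in\{0,\dots,k-1\}$. There exists a unitary $G_k$ on $n$ qubits with $G_k\ket{i}_n=e^{\mathrm i\varphi_i}\ket{i}_n$ for $i\in\{0,\dots,k-1\}$ and $G_k\ket{\psi}=e^{\mathrm i\varphi_k}\ket{k}_n$ ($\varphi_i\in\mathbb R$) which can be decomposed into single-qubit and C-NOT gates using at most $(2^n-n-1)+Q^k(n)N_{C_{n-1}(U)}$ C-NOT gates, where $Q^k(n)=|\{s\in\{0,\dots,n-1\}: k_s=0\text{ and }b^k_{s+1}\neq 0\}|$.
   Context: Computational basis of $n$ qubits: $\ket{b_{n-1}\dots b_0}=:\ket{\sum_ib_i2^i}_n$. $k_i$ are the binary digits of $k$, and $b^k_{s}=k \bmod 2^{s}$. $N_{C_{n-1}(U)}$ denotes a number of C-NOT gates sufficient to decompose any $(n-1)$-controlled single-qubit gate on $n$ qubits (applying a single-qubit unitary to one target qubit iff the other $n-1$ qubits are in a prescribed computational basis state, identity otherwise) into single-qubit and C-NOT gates. *)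

theory Defs
  imports Complex_Main "Jordan_Normal_Form.Matrix" "Jordan_Normal_Form.Schur_Decomposition"
begin

(* Computational basis of n qubits: |b_{n-1} ... b_0> = |sum_i b_i 2^i>_n.
   Qubit q therefore corresponds to bit q of the basis index. *)

definition qbit :: "nat \<Rightarrow> nat \<Rightarrow> nat" where
  "qbit i q = i div 2 ^ q mod 2"

definition unitary2 :: "complex mat \<Rightarrow> bool" where
  "unitary2 U \<longleftrightarrow> U \<in> carrier_mat 2 2 \<and> mat_adjoint U * U = 1\<^sub>m 2"

(* elementary gates: single-qubit gate U on target qubit t; C-NOT with control c, target t *)
datatype gate = Single nat "complex mat" | CNOT nat nat

fun wf_gate :: "nat \<Rightarrow> gate \<Rightarrow> bool" where
  "wf_gate n (Single t U) \<longleftrightarrow> t < n \<and> unitary2 U"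
| "wf_gate n (CNOT c t) \<longleftrightarrow> c < n \<and> t < n \<and> c \<noteq> t"

definition flip :: "nat \<Rightarrow> nat \<Rightarrow> nat" where
  "flip t j = (if qbit j t = 1 then j - 2 ^ t else j + 2 ^ t)"

fun gate_mat :: "nat \<Rightarrow> gate \<Rightarrow> complex mat" where
  "gate_mat n (Single t U) = mat (2 ^ n) (2 ^ n)
      (\<lambda>(i, j). if (\<forall>q. q \<noteq> t \<longrightarrow> qbit i q = qbit j q) then U $$ (qbit i t, qbit j t) else 0)"
| "gate_mat n (CNOT c t) = mat (2 ^ n) (2 ^ n)
      (\<lambda>(i, j). if i = (if qbit j c = 1 then flip t j else j) then 1 else 0)"

(* a circuit is a list of gates, applied from the head of the list onwards *)
type_synonym circuit = "gate list"

fun circuit_mat :: "nat \<Rightarrow> circuit \<Rightarrow> complex mat" where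
  "circuit_mat n [] = 1\<^sub>m (2 ^ n)"
| "circuit_mat n (g # gs) = circuit_mat n gs * gate_mat n g"

definition wf_circuit :: "nat \<Rightarrow> circuit \<Rightarrow> bool" where
  "wf_circuit n C \<longleftrightarrow> (\<forall>g \<in> set C. wf_gate n g)"

definition cnot_count :: "circuit \<Rightarrow> nat" where
  "cnot_count C = length (filter (\<lambda>g. case g of CNOT _ _ \<Rightarrow> True | _ \<Rightarrow> False) C)"

definition decomposable_with :: "nat \<Rightarrow> nat \<Rightarrow> complex mat \<Rightarrow> bool" where
  "decomposable_with n m M \<longleftrightarrow>
     (\<exists>C. wf_circuit n C \<and> circuit_mat n C = M \<and> cnot_count C \<le> m)"

definition controlled_gate :: "nat \<Rightarrow> nat \<Rightarrow> nat \<Rightarrow> complex mat \<Rightarrow> complex mat" where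
  "controlled_gate n t p U = mat (2 ^ n) (2 ^ n)
      (\<lambda>(i, j). if (\<forall>q < n. q \<noteq> t \<longrightarrow> qbit i q = qbit p q \<and> qbit j q = qbit p q)
                then U $$ (qbit i t, qbit j t) else (if i = j then 1 else 0))"

definition sufficient_CU :: "nat \<Rightarrow> nat \<Rightarrow> bool" where
  "sufficient_CU n N \<longleftrightarrow>
     (\<forall>t p U. t < n \<longrightarrow> p < 2 ^ n \<longrightarrow> unitary2 U \<longrightarrow>
        decomposable_with n N (controlled_gate n t p U))"

definition Qk :: "nat \<Rightarrow> nat \<Rightarrow> nat" where
  "Qk k n = card {s \<in> {0..<n}. qbit k s = 0 \<and> k mod 2 ^ (s + 1) \<noteq> 0}"

end

theory Submission
  imports Defs
begin


declare power_Suc[simp del]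

definition sim :: "nat \<Rightarrow> nat \<Rightarrow> nat \<Rightarrow> bool" where
  "sim t a b \<longleftrightarrow> a div 2^(Suc t) = b div 2^(Suc t) \<and> a mod 2^t = b mod 2^t"

definition setb :: "nat \<Rightarrow> nat \<Rightarrow> nat \<Rightarrow> nat" where
  "setb t \<beta> a = a div 2^(Suc t) * 2^(Suc t) + \<beta> * 2^t + a mod 2^t"

lemma qbit_lt2: "qbit a t < 2" unfolding qbit_def by simp

lemma qbit_bit: "qbit a q = (if bit a q then 1 else 0)"
  unfolding qbit_def bit_nat_def by (simp add: odd_iff_mod_2_eq_one)

lemma decomp: "a = a div 2^(Suc t) * 2^(Suc t) + qbit a t * 2^t + a mod 2^t"
proof -
  have 1: "a div 2^t * 2^t + a mod 2^t = a" by (rule div_mult_mod_eq)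
  have 3: "a div 2^t div 2 = a div 2^(Suc t)" by (simp only: power_Suc2 div_mult2_eq)
  have 2: "a div 2^(Suc t) * 2 + qbit a t = a div 2^t"
    unfolding qbit_def 3[symmetric] by (rule div_mult_mod_eq)
  have "a = (a div 2^(Suc t) * 2 + qbit a t) * 2^t + a mod 2^t" unfolding 2 using 1 by simp
  also have "\<dots> = a div 2^(Suc t) * 2^(Suc t) + qbit a t * 2^t + a mod 2^t"
    by (simp add: algebra_simps power_Suc)
  finally show ?thesis .
qed

lemma triple:
  assumes "\<beta> < 2" "L < 2^t"
  shows "(H * 2^(Suc t) + \<beta> * 2^t + L) div 2^(Suc t) = H"
    and "(H * 2^(Suc t) + \<beta> * 2^t + L) mod 2^t = L"
    and "qbit (H * 2^(Suc t) + \<beta> * 2^t + L) t = \<beta>"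
proof -
  have lt: "\<beta> * 2^t + L < 2^(Suc t)"
  proof -
    have "\<beta> * 2^t \<le> 1 * 2^t" using assms(1) by (intro mult_right_mono) auto
    moreover have "(2::nat)^(Suc t) = 2^t + 2^t" by simp
    ultimately show ?thesis using assms(2) by linarith
  qed
  show 1: "(H * 2^(Suc t) + \<beta> * 2^t + L) div 2^(Suc t) = H"
    using lt by (simp add: add.assoc)
  have "(H * 2^(Suc t) + \<beta> * 2^t + L) = (H * 2 + \<beta>) * 2^t + L"
    by (simp add: algebra_simps)
  then show "(H * 2^(Suc t) + \<beta> * 2^t + L) mod 2^t = L"
    using assms(2) by simp
  have "(H * 2^(Suc t) + \<beta> * 2^t + L) div 2^t = H * 2 + \<beta>"
    using \<open>_ = (H * 2 + \<beta>) * 2^t + L\<close> assms(2) by simp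
  then show "qbit (H * 2^(Suc t) + \<beta> * 2^t + L) t = \<beta>"
    unfolding qbit_def using assms(1) by simp
qed

lemma setb_div[simp]: "\<beta> < 2 \<Longrightarrow> setb t \<beta> a div 2^(Suc t) = a div 2^(Suc t)"
  unfolding setb_def by (rule triple(1)) simp_all
lemma setb_mod[simp]: "\<beta> < 2 \<Longrightarrow> setb t \<beta> a mod 2^t = a mod 2^t"
  unfolding setb_def by (rule triple(2)) simp_all
lemma setb_qbit[simp]: "\<beta> < 2 \<Longrightarrow> qbit (setb t \<beta> a) t = \<beta>"
  unfolding setb_def by (rule triple(3)) simp_all

lemma sim_refl[simp]: "sim t a a" unfolding sim_def by simp
lemma sim_sym: "sim t a b \<Longrightarrow> sim t b a" unfolding sim_def by simp
lemma sim_trans: "sim t a b \<Longrightarrow> sim t b c \<Longrightarrow> sim t a c" unfolding sim_def by simp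
lemma sim_setb[simp]: "\<beta> < 2 \<Longrightarrow> sim t (setb t \<beta> a) a"
  using setb_div[of \<beta> t a] setb_mod[of \<beta> t a] unfolding sim_def by blast

lemma sim_eq_setb: "sim t a b \<Longrightarrow> b = setb t (qbit b t) a"
proof -
  assume "sim t a b"
  hence H1: "a div 2^(Suc t) = b div 2^(Suc t)" and H2: "a mod 2^t = b mod 2^t" unfolding sim_def by auto
  show ?thesis unfolding setb_def H1 H2 by (rule decomp)
qed

lemma setb_self: "setb t (qbit a t) a = a"
  unfolding setb_def by (rule decomp[symmetric])

lemma sim_eq: "sim t a b \<Longrightarrow> qbit a t = qbit b t \<Longrightarrow> a = b"
  using sim_eq_setb[of t a b] setb_self[of t a] by simp

lemma setb_inj: "\<beta> < 2 \<Longrightarrow> \<gamma> < 2 \<Longrightarrow> setb t \<beta> a = setb t \<gamma> a \<Longrightarrow> \<beta> = \<gamma>"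
proof -
  assume b: "\<beta> < 2" and c: "\<gamma> < 2" and e: "setb t \<beta> a = setb t \<gamma> a"
  have "qbit (setb t \<beta> a) t = qbit (setb t \<gamma> a) t" using e by (rule arg_cong)
  thus ?thesis unfolding setb_qbit[OF b] setb_qbit[OF c] .
qed

lemma setb_lt:
  assumes "a < 2^n" "t < n" "\<beta> < 2"
  shows "setb t \<beta> a < 2^n"
proof -
  have nn: "n = (n - Suc t) + Suc t" using assms(2) by simp
  have e0: "(2::nat)^n = 2^((n - Suc t) + Suc t)" using nn by (rule arg_cong)
  have e: "2^n = 2^(n - Suc t) * (2::nat)^(Suc t)" unfolding e0 by (simp only: power_add)
  have "a div 2^(Suc t) < 2^(n - Suc t)"
    using assms(1) unfolding e by (rule less_mult_imp_div_less)
  hence "a div 2^(Suc t) + 1 \<le> 2^(n - Suc t)" by simp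
  hence "(a div 2^(Suc t) + 1) * 2^(Suc t) \<le> 2^(n - Suc t) * 2^(Suc t)"
    by (rule mult_right_mono) simp
  also have "\<dots> = 2^n" by (rule e[symmetric])
  finally have A: "a div 2^(Suc t) * 2^(Suc t) + 2^(Suc t) \<le> 2^n" by (simp add: algebra_simps)
  have "\<beta> * 2^t + a mod 2^t < 2^(Suc t)"
  proof -
    have "\<beta> * 2^t \<le> 1 * 2^t" using assms(3) by (intro mult_right_mono) auto
    moreover have "a mod 2^t < 2^t" by simp
    moreover have "(2::nat)^(Suc t) = 2^t + 2^t" by (simp add: power_Suc)
    ultimately show ?thesis by linarith
  qed
  thus ?thesis using A unfolding setb_def by linarith
qed

lemma bit_div2: "bit (a div 2^m) q = bit (a::nat) (m + q)"
  by (simp add: bit_nat_def div_mult2_eq power_add)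

lemma bit_mod2: "bit ((a::nat) mod 2^m) q = (q < m \<and> bit a q)"
  unfolding take_bit_eq_mod[symmetric] by (rule bit_take_bit_iff)

lemma sim_iff_qbit: "(\<forall>q. q \<noteq> t \<longrightarrow> qbit a q = qbit b q) \<longleftrightarrow> sim t a b"
proof
  assume H: "\<forall>q. q \<noteq> t \<longrightarrow> qbit a q = qbit b q"
  have B: "bit a q = bit b q" if "q \<noteq> t" for q
  proof -
    have "qbit a q = qbit b q" using H that by blast
    thus ?thesis unfolding qbit_bit by (auto split: if_splits)
  qed
  have "a div 2^(Suc t) = b div 2^(Suc t)"
  proof (rule bit_eqI)
    fix m show "bit (a div 2^(Suc t)) m = bit (b div 2^(Suc t)) m"
      unfolding bit_div2 using B[of "Suc t + m"] by simp
  qed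
  moreover have "a mod 2^t = b mod 2^t"
    by (rule bit_eqI) (auto simp add: bit_mod2 B)
  ultimately show "sim t a b" unfolding sim_def by simp
next
  assume "sim t a b"
  hence D: "a div 2^(Suc t) = b div 2^(Suc t)" and M: "a mod 2^t = b mod 2^t" unfolding sim_def by auto
  show "\<forall>q. q \<noteq> t \<longrightarrow> qbit a q = qbit b q"
  proof (intro allI impI)
    fix q assume "q \<noteq> t"
    then consider "q < t" | "q > t" by linarith
    then have "bit a q = bit b q"
    proof cases
      case 1 then show ?thesis using bit_mod2[of a t q] bit_mod2[of b t q] M by simp
    next
      case 2
      then obtain r where r: "q = Suc t + r" using less_imp_Suc_add[OF 2] by auto
      show ?thesis using bit_div2[of a "Suc t" r] bit_div2[of b "Suc t" r] D r by simp
    qed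
    thus "qbit a q = qbit b q" unfolding qbit_bit by simp
  qed
qed

lemma qbit_high: "(a::nat) < 2^n \<Longrightarrow> n \<le> q \<Longrightarrow> qbit a q = 0"
proof -
  assume "a < 2^n" "n \<le> q"
  hence "a < 2^q" by (meson order_less_le_trans one_le_numeral power_increasing)
  thus ?thesis unfolding qbit_def by simp
qed

lemma sim_iff_qbit_n:
  assumes "a < 2^n" "b < 2^n"
  shows "(\<forall>q<n. q \<noteq> t \<longrightarrow> qbit a q = qbit b q) \<longleftrightarrow> sim t a b"
proof -
  have hi: "qbit a q = qbit b q" if "\<not> q < n" for q
    using qbit_high[OF assms(1)] qbit_high[OF assms(2)] that by simp
  have "(\<forall>q<n. q \<noteq> t \<longrightarrow> qbit a q = qbit b q) \<longleftrightarrow> (\<forall>q. q \<noteq> t \<longrightarrow> qbit a q = qbit b q)"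
  proof
    assume L: "\<forall>q<n. q \<noteq> t \<longrightarrow> qbit a q = qbit b q"
    show "\<forall>q. q \<noteq> t \<longrightarrow> qbit a q = qbit b q"
    proof (intro allI impI)
      fix q assume "q \<noteq> t"
      show "qbit a q = qbit b q" proof (cases "q < n")
        case True then show ?thesis using L \<open>q \<noteq> t\<close> by blast
      next
        case False then show ?thesis by (rule hi)
      qed
    qed
  qed blast
  thus ?thesis using sim_iff_qbit by blast
qed

lemma sim_qbit_other: "sim t a b \<Longrightarrow> c \<noteq> t \<Longrightarrow> qbit a c = qbit b c"
  using sim_iff_qbit by blast

lemma flip_setb: "flip t b = setb t (1 - qbit b t) b"
proof -
  have d: "b = b div 2^(Suc t) * 2^(Suc t) + qbit b t * 2^t + b mod 2^t" by (rule decomp)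
  show ?thesis
  proof (cases "qbit b t = 1")
    case True
    have "b - 2^t = b div 2^(Suc t) * 2^(Suc t) + 0 * 2^t + b mod 2^t" using d True by (simp add: algebra_simps)
    then show ?thesis unfolding flip_def setb_def using True by simp
  next
    case False
    then have q0: "qbit b t = 0" using qbit_lt2[of b t] by linarith
    have "b + 2^t = b div 2^(Suc t) * 2^(Suc t) + 1 * 2^t + b mod 2^t" using d q0 by (simp add: algebra_simps)
    then show ?thesis unfolding flip_def setb_def using q0 by simp
  qed
qed


definition GM :: "nat \<Rightarrow> nat \<Rightarrow> (nat \<Rightarrow> complex mat) \<Rightarrow> complex mat" where
  "GM n t B = mat (2^n) (2^n) (\<lambda>(a,b). if sim t a b then B a $$ (qbit a t, qbit b t) else 0)"

definition invar :: "nat \<Rightarrow> (nat \<Rightarrow> 'a) \<Rightarrow> bool" where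
  "invar t B \<longleftrightarrow> (\<forall>a b. sim t a b \<longrightarrow> B a = B b)"

lemma GM_carrier[simp]: "GM n t B \<in> carrier_mat (2^n) (2^n)" unfolding GM_def by simp
lemma GM_dims[simp]: "dim_row (GM n t B) = 2^n" "dim_col (GM n t B) = 2^n" unfolding GM_def by simp_all
lemma GM_index: "a < 2^n \<Longrightarrow> b < 2^n \<Longrightarrow> GM n t B $$ (a,b) = (if sim t a b then B a $$ (qbit a t, qbit b t) else 0)"
  unfolding GM_def by simp

lemma sim_set:
  assumes "a < 2^n" "t < n"
  shows "{b \<in> {0..<2^n}. sim t a b} = {setb t 0 a, setb t 1 a}"
proof
  show "{b \<in> {0..<2^n}. sim t a b} \<subseteq> {setb t 0 a, setb t 1 a}"
  proof
    fix b assume "b \<in> {b \<in> {0..<2^n}. sim t a b}"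
    hence "sim t a b" by simp
    hence "b = setb t (qbit b t) a" by (rule sim_eq_setb)
    moreover have "qbit b t = 0 \<or> qbit b t = 1" using qbit_lt2[of b t] by linarith
    ultimately show "b \<in> {setb t 0 a, setb t 1 a}" by auto
  qed
next
  show "{setb t 0 a, setb t 1 a} \<subseteq> {b \<in> {0..<2^n}. sim t a b}"
    using setb_lt[OF assms] sim_setb sim_sym by auto
qed

lemma setb_01: "setb t 0 a \<noteq> setb t 1 a"
  using setb_qbit[of 0 t a] setb_qbit[of 1 t a] by force

lemma sum_sim:
  assumes "a < 2^n" "t < n"
  shows "(\<Sum>b\<in>{0..<2^n}. if sim t a b then f b else 0) = f (setb t 0 a) + f (setb t 1 a)"
proof -
  have "(\<Sum>b\<in>{0..<2^n}. if sim t a b then f b else 0) = sum f {b \<in> {0..<2^n}. sim t a b}"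
    using sum.inter_filter[of "{0..<2^n}" f "sim t a"] by simp
  also have "\<dots> = sum f {setb t 0 a, setb t 1 a}" using sim_set[OF assms] by simp
  also have "\<dots> = f (setb t 0 a) + f (setb t 1 a)" using setb_01 by simp
  finally show ?thesis .
qed

lemma GM_mult_vec:
  assumes "a < 2^n" "t < n" "v \<in> carrier_vec (2^n)"
  shows "(GM n t B *\<^sub>v v) $ a = B a $$ (qbit a t, 0) * v $ setb t 0 a + B a $$ (qbit a t, 1) * v $ setb t 1 a"
proof -
  have "(GM n t B *\<^sub>v v) $ a = (\<Sum>b\<in>{0..<2^n}. GM n t B $$ (a,b) * v $ b)"
    using assms by (simp add: row_def scalar_prod_def)
  also have "\<dots> = (\<Sum>b\<in>{0..<2^n}. if sim t a b then B a $$ (qbit a t, qbit b t) * v $ b else 0)"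
    using assms by (intro sum.cong) (auto simp: GM_index)
  also have "\<dots> = B a $$ (qbit a t, 0) * v $ setb t 0 a + B a $$ (qbit a t, 1) * v $ setb t 1 a"
    using sum_sim[OF assms(1,2), of "\<lambda>b. B a $$ (qbit a t, qbit b t) * v $ b"] by simp
  finally show ?thesis .
qed

lemma sum2: "(\<Sum>i\<in>{0..<2::nat}. f i) = f 0 + f 1"
  by (simp add: numeral_2_eq_2)

lemma mat2_mult_index:
  assumes "A \<in> carrier_mat 2 2" "B \<in> carrier_mat 2 2" "i < 2" "j < 2"
  shows "(A * B) $$ (i,j) = A $$ (i,0) * B $$ (0,j) + A $$ (i,1) * B $$ (1,j)"
  using assms by (simp add: scalar_prod_def sum2)

lemma GM_mult:
  assumes "t < n" "invar t B'" "\<And>a. B a \<in> carrier_mat 2 2" "\<And>a. B' a \<in> carrier_mat 2 2"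
  shows "GM n t B * GM n t B' = GM n t (\<lambda>a. B a * B' a)"
proof (rule eq_matI)
  fix a c assume ac: "a < dim_row (GM n t (\<lambda>a. B a * B' a))" "c < dim_col (GM n t (\<lambda>a. B a * B' a))"
  hence a: "a < 2^n" and c: "c < 2^n" by auto
  have "(GM n t B * GM n t B') $$ (a,c) = (\<Sum>b\<in>{0..<2^n}. GM n t B $$ (a,b) * GM n t B' $$ (b,c))"
    using a c by (simp add: scalar_prod_def)
  also have "\<dots> = (\<Sum>b\<in>{0..<2^n}. if sim t a b then B a $$ (qbit a t, qbit b t) * GM n t B' $$ (b,c) else 0)"
    using a c by (intro sum.cong) (auto simp: GM_index[of a n])
  also have "\<dots> = B a $$ (qbit a t, 0) * GM n t B' $$ (setb t 0 a, c) + B a $$ (qbit a t, 1) * GM n t B' $$ (setb t 1 a, c)"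
    using sum_sim[OF a assms(1), of "\<lambda>b. B a $$ (qbit a t, qbit b t) * GM n t B' $$ (b,c)"] by simp
  also have "\<dots> = GM n t (\<lambda>a. B a * B' a) $$ (a,c)"
  proof (cases "sim t a c")
    case True
    have s: "sim t (setb t \<beta> a) c" if "\<beta> < 2" for \<beta> using True that sim_setb sim_trans by blast
    have e: "B' (setb t \<beta> a) = B' a" if "\<beta> < 2" for \<beta> using assms(2) that unfolding invar_def
      using sim_setb by blast
    show ?thesis using True s e a c setb_lt[OF a assms(1)] qbit_lt2[of a t] qbit_lt2[of c t]
      by (simp add: GM_index mat2_mult_index assms(3,4))
  next
    case False
    have s: "\<not> sim t (setb t \<beta> a) c" if "\<beta> < 2" for \<beta> using False that sim_setb sim_trans sim_sym by blast
    show ?thesis using False s a c setb_lt[OF a assms(1)] by (simp add: GM_index)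
  qed
  finally show "(GM n t B * GM n t B') $$ (a,c) = GM n t (\<lambda>a. B a * B' a) $$ (a,c)" .
qed auto

lemma adj_index:
  assumes "i < dim_col A" "j < dim_row A"
  shows "mat_adjoint A $$ (i,j) = conjugate (A $$ (j,i))"
  using assms unfolding mat_adjoint_def by (simp add: mat_of_rows_def)

lemma adj_dims[simp]: "dim_row (mat_adjoint A) = dim_col A" "dim_col (mat_adjoint A) = dim_row A"
  unfolding mat_adjoint_def by (simp_all add: mat_of_rows_def)

lemma adj_carrier: "A \<in> carrier_mat m n \<Longrightarrow> mat_adjoint A \<in> carrier_mat n m"
  by (intro carrier_matI) (auto dest: carrier_matD)

lemma GM_adj:
  assumes "invar t B" "\<And>a. B a \<in> carrier_mat 2 2"
  shows "mat_adjoint (GM n t B) = GM n t (\<lambda>a. mat_adjoint (B a))"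
proof (rule eq_matI)
  fix a c assume "a < dim_row (GM n t (\<lambda>a. mat_adjoint (B a)))" "c < dim_col (GM n t (\<lambda>a. mat_adjoint (B a)))"
  hence a: "a < 2^n" and c: "c < 2^n" by auto
  show "mat_adjoint (GM n t B) $$ (a,c) = GM n t (\<lambda>a. mat_adjoint (B a)) $$ (a,c)"
    using a c assms qbit_lt2[of a t] qbit_lt2[of c t] unfolding invar_def
    by (auto simp: adj_index GM_index sim_sym carrier_matD[OF assms(2)])
qed auto

lemma GM_one:
  assumes "t < n"
  shows "GM n t (\<lambda>_. 1\<^sub>m 2) = 1\<^sub>m (2^n)"
proof (rule eq_matI)
  fix a c assume "a < dim_row (1\<^sub>m (2^n) :: complex mat)" "c < dim_col (1\<^sub>m (2^n) :: complex mat)"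
  hence a: "a < 2^n" and c: "c < 2^n" by auto
  show "GM n t (\<lambda>_. 1\<^sub>m 2) $$ (a,c) = 1\<^sub>m (2^n) $$ (a,c)"
    using a c qbit_lt2[of a t] qbit_lt2[of c t] sim_eq[of t a c]
    by (auto simp: GM_index)
qed auto

lemma GM_cong: "(\<And>a. a < 2^n \<Longrightarrow> B a = B' a) \<Longrightarrow> GM n t B = GM n t B'"
  unfolding GM_def by (intro eq_matI) auto

lemma GM_unit:
  assumes "i < 2^n" "t < n" "invar t B" "B i $$ (1 - qbit i t, qbit i t) = 0"
  shows "GM n t B *\<^sub>v unit_vec (2^n) i = B i $$ (qbit i t, qbit i t) \<cdot>\<^sub>v unit_vec (2^n) i"
proof (rule eq_vecI)
  fix a assume "a < dim_vec (B i $$ (qbit i t, qbit i t) \<cdot>\<^sub>v unit_vec (2^n) i)"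
  hence a: "a < 2^n" by simp
  have q: "qbit a t < 2" "qbit i t < 2" by (rule qbit_lt2)+
  have l: "setb t 0 a < 2^n" "setb t 1 a < 2^n" using setb_lt[OF a assms(2)] by auto
  have E: "(GM n t B *\<^sub>v unit_vec (2^n) i) $ a = B a $$ (qbit a t, 0) * unit_vec (2^n) i $ setb t 0 a + B a $$ (qbit a t, 1) * unit_vec (2^n) i $ setb t 1 a"
    by (rule GM_mult_vec[OF a assms(2)]) simp
  show "(GM n t B *\<^sub>v unit_vec (2^n) i) $ a = (B i $$ (qbit i t, qbit i t) \<cdot>\<^sub>v unit_vec (2^n) i) $ a"
  proof (cases "sim t a i")
    case True
    hence Bi: "B a = B i" using assms(3) unfolding invar_def by blast
    have ii: "i = setb t (qbit i t) a" using True by (rule sim_eq_setb)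
    have U: "unit_vec (2^n) i $ setb t \<beta> a = (if \<beta> = qbit i t then 1 else 0)" if "\<beta> < 2" for \<beta>
    proof -
      have EE: "setb t \<beta> a = i \<longleftrightarrow> \<beta> = qbit i t"
      proof
        assume "setb t \<beta> a = i" thus "\<beta> = qbit i t" using setb_qbit[OF that, of t a] by simp
      next
        assume "\<beta> = qbit i t" thus "setb t \<beta> a = i" using ii by simp
      qed
      show ?thesis unfolding unit_vec_def using EE setb_lt[OF a assms(2) that] by auto
    qed
    have U0: "unit_vec (2^n) i $ setb t 0 a = (if qbit i t = 0 then 1 else 0)" using U[of 0] by auto
    have U1: "unit_vec (2^n) i $ setb t 1 a = (if qbit i t = 1 then 1 else 0)" using U[of 1] by auto
    have V: "(GM n t B *\<^sub>v unit_vec (2^n) i) $ a = B i $$ (qbit a t, qbit i t)"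
    proof (cases "qbit i t = 0")
      case True then show ?thesis unfolding E U0 U1 Bi by simp
    next
      case False then have "qbit i t = 1" using q(2) by linarith
      then show ?thesis unfolding E U0 U1 Bi by simp
    qed
    show ?thesis
    proof (cases "a = i")
      case True
      then show ?thesis using V a by simp
    next
      case False
      have "qbit a t \<noteq> qbit i t" using sim_eq[OF \<open>sim t a i\<close>] False by blast
      hence "qbit a t = 1 - qbit i t" using q by linarith
      then show ?thesis using V assms(4) False a by (simp add: unit_vec_def)
    qed
  next
    case False
    have ne: "setb t \<beta> a \<noteq> i" if "\<beta> < 2" for \<beta>
    proof
      assume "setb t \<beta> a = i"
      hence "sim t i a" using sim_setb[OF that, of t a] by simp
      thus False using False sim_sym by blast
    qed
    have Z0: "unit_vec (2^n) i $ setb t 0 a = 0" using l(1) ne[of 0] by (simp add: unit_vec_def)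
    have Z1: "unit_vec (2^n) i $ setb t 1 a = 0" using l(2) ne[of 1] by (simp add: unit_vec_def)
    have ai: "a \<noteq> i" using False by auto
    have "(GM n t B *\<^sub>v unit_vec (2^n) i) $ a = 0" unfolding E Z0 Z1 by simp
    moreover have "(B i $$ (qbit i t, qbit i t) \<cdot>\<^sub>v unit_vec (2^n) i) $ a = 0"
      using a ai by (simp add: unit_vec_def)
    ultimately show ?thesis by simp
  qed
qed simp


lemma qbit01: "qbit a t = 0 \<or> qbit a t = 1" using qbit_lt2[of a t] by linarith

lemma less2_cases: "(i::nat) < 2 \<Longrightarrow> i = 0 \<or> i = 1" by linarith

definition m2 :: "complex \<Rightarrow> complex \<Rightarrow> complex \<Rightarrow> complex \<Rightarrow> complex mat" where
  "m2 a b c d = mat 2 2 (\<lambda>(i,j). if i = 0 then (if j = 0 then a else b) else (if j = 0 then c else d))"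

lemma m2_carrier[simp]: "m2 a b c d \<in> carrier_mat 2 2" unfolding m2_def by simp
lemma m2_dims[simp]: "dim_row (m2 a b c d) = 2" "dim_col (m2 a b c d) = 2" unfolding m2_def by simp_all
lemma m2_index[simp]: "m2 a b c d $$ (0,0) = a" "m2 a b c d $$ (0,1) = b"
  "m2 a b c d $$ (1,0) = c" "m2 a b c d $$ (1,1) = d"
  "m2 a b c d $$ (0,Suc 0) = b" "m2 a b c d $$ (Suc 0,0) = c" "m2 a b c d $$ (Suc 0,Suc 0) = d"
  unfolding m2_def by simp_all

lemma mat2_eqI:
  assumes "A \<in> carrier_mat 2 2" "B \<in> carrier_mat 2 2"
    "A $$ (0,0) = B $$ (0,0)" "A $$ (0,1) = B $$ (0,1)" "A $$ (1,0) = B $$ (1,0)" "A $$ (1,1) = B $$ (1,1)"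
  shows "A = B"
proof (rule eq_matI)
  fix i j assume "i < dim_row B" "j < dim_col B"
  hence "i = 0 \<or> i = 1" "j = 0 \<or> j = 1" using assms(2) by auto
  thus "A $$ (i,j) = B $$ (i,j)" using assms by auto
qed (use assms in auto)

lemma mat2_eta: "A \<in> carrier_mat 2 2 \<Longrightarrow> A = m2 (A$$(0,0)) (A$$(0,1)) (A$$(1,0)) (A$$(1,1))"
  by (rule mat2_eqI) auto

lemma m2_eq_iff: "m2 a b c d = m2 a' b' c' d' \<longleftrightarrow> a = a' \<and> b = b' \<and> c = c' \<and> d = d'"
  by (metis m2_index)

lemma m2_mult[simp]: "m2 a b c d * m2 e f g h = m2 (a*e+b*g) (a*f+b*h) (c*e+d*g) (c*f+d*h)"
  apply (rule mat2_eqI)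
  apply (rule mult_carrier_mat[OF m2_carrier m2_carrier])
  by (simp_all add: scalar_prod_def sum2 row_def col_def)

lemma m2_obtain: "(A :: complex mat) \<in> carrier_mat 2 2 \<Longrightarrow> \<exists>a b c d. A = m2 a b c d"
  using mat2_eta by blast

lemma m2_adj[simp]: "mat_adjoint (m2 a b c d) = m2 (cnj a) (cnj c) (cnj b) (cnj d)"
  by (rule mat2_eqI) (simp_all add: adj_index adj_carrier)

lemma one2: "1\<^sub>m 2 = m2 1 0 0 1" by (rule mat2_eqI) auto

definition Xm :: "complex mat" where "Xm = m2 0 1 1 0"
definition Zm :: "complex mat" where "Zm = m2 1 0 0 (-1)"
definition hh :: complex where "hh = complex_of_real (1 / sqrt 2)"
definition Hm :: "complex mat" where "Hm = m2 hh hh hh (-hh)"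

lemma hh_sq: "hh * hh = 1/2"
proof -
  have r: "(1 / sqrt 2) * (1 / sqrt 2) = (1/2::real)" by (simp add: divide_simps)
  have "hh * hh = complex_of_real ((1 / sqrt 2) * (1 / sqrt 2))" by (simp only: hh_def of_real_mult)
  also have "\<dots> = complex_of_real (1/2)" by (simp only: r)
  also have "\<dots> = 1/2" by simp
  finally show ?thesis .
qed

lemma cnj_hh[simp]: "cnj hh = hh" unfolding hh_def by simp

lemma HXH: "Hm * Xm * Hm = Zm"
  unfolding Hm_def Xm_def Zm_def by (simp add: m2_eq_iff algebra_simps hh_sq)
lemma HIH: "Hm * 1\<^sub>m 2 * Hm = 1\<^sub>m 2"
  unfolding Hm_def one2 by (simp add: m2_eq_iff algebra_simps hh_sq)

lemma unitary2_m2: "unitary2 (m2 a b c d) \<longleftrightarrow>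
   cnj a * a + cnj c * c = 1 \<and> cnj a * b + cnj c * d = 0 \<and> cnj b * a + cnj d * c = 0 \<and> cnj b * b + cnj d * d = 1"
  unfolding unitary2_def one2 by (simp add: m2_eq_iff)

lemma unitary2_Xm: "unitary2 Xm" unfolding Xm_def unitary2_m2 by simp
lemma unitary2_Zm: "unitary2 Zm" unfolding Zm_def unitary2_m2 by simp
lemma unitary2_one: "unitary2 (1\<^sub>m 2)" unfolding one2 unitary2_m2 by simp
lemma unitary2_Hm: "unitary2 Hm" unfolding Hm_def unitary2_m2 by (simp add: hh_sq)

lemma unitary2_carrier: "unitary2 U \<Longrightarrow> U \<in> carrier_mat 2 2" unfolding unitary2_def by simp

lemma unitary2_right: "unitary2 U \<Longrightarrow> U * mat_adjoint U = 1\<^sub>m 2"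
  unfolding unitary2_def using adj_carrier[of U 2 2] mat_mult_left_right_inverse[of "mat_adjoint U" 2 U] by blast

lemma adj_adj: "(A :: complex mat) \<in> carrier_mat 2 2 \<Longrightarrow> mat_adjoint (mat_adjoint A) = A"
  using m2_obtain[of A] by auto

lemma adj_mult2: "(A :: complex mat) \<in> carrier_mat 2 2 \<Longrightarrow> B \<in> carrier_mat 2 2 \<Longrightarrow> mat_adjoint (A * B) = mat_adjoint B * mat_adjoint A"
  using m2_obtain[of A] m2_obtain[of B] by (auto simp: m2_eq_iff ac_simps)

lemma unitary2_adj: "unitary2 U \<Longrightarrow> unitary2 (mat_adjoint U)"
  unfolding unitary2_def using unitary2_right[of U] adj_adj[of U] adj_carrier[of U 2 2]
  by (simp add: unitary2_def)

lemma unitary2_mult: assumes "unitary2 A" "unitary2 B" shows "unitary2 (A * B)"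
proof -
  have A: "A \<in> carrier_mat 2 2" and B: "B \<in> carrier_mat 2 2" using assms unitary2_carrier by auto
  have aA: "mat_adjoint A * A = 1\<^sub>m 2" and bB: "mat_adjoint B * B = 1\<^sub>m 2" using assms unfolding unitary2_def by auto
  have "mat_adjoint (A * B) * (A * B) = mat_adjoint B * (mat_adjoint A * A) * B"
    using A B adj_carrier[OF A] adj_carrier[OF B] by (simp add: adj_mult2 assoc_mult_mat[of _ 2 2 _ 2 _ 2])
  also have "\<dots> = 1\<^sub>m 2" using aA bB B adj_carrier[OF B] by simp
  finally show ?thesis unfolding unitary2_def using A B by simp
qed

lemma gate_single: "gate_mat n (Single t U) = GM n t (\<lambda>_. U)"
  unfolding GM_def by (simp add: sim_iff_qbit)

lemma setb_iff: "\<gamma> < 2 \<Longrightarrow> a = setb t \<gamma> b \<longleftrightarrow> sim t a b \<and> qbit a t = \<gamma>"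
proof
  assume g: "\<gamma> < 2" and "a = setb t \<gamma> b"
  thus "sim t a b \<and> qbit a t = \<gamma>" using sim_setb[OF g] setb_qbit[OF g] by simp
next
  assume "sim t a b \<and> qbit a t = \<gamma>"
  thus "a = setb t \<gamma> b" using sim_eq_setb[of t b a] sim_sym by blast
qed

lemma gate_cnot:
  assumes "c \<noteq> t"
  shows "gate_mat n (CNOT c t) = GM n t (\<lambda>a. if qbit a c = 1 then Xm else 1\<^sub>m 2)"
proof (rule eq_matI)
  fix a b assume "a < dim_row (GM n t (\<lambda>a. if qbit a c = 1 then Xm else 1\<^sub>m 2))"
    "b < dim_col (GM n t (\<lambda>a. if qbit a c = 1 then Xm else 1\<^sub>m 2))"
  hence a: "a < 2^n" and b: "b < 2^n" by auto
  have sc: "sim t a b \<Longrightarrow> qbit a c = qbit b c" using sim_qbit_other assms by blast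
  have G: "GM n t (\<lambda>a. if qbit a c = 1 then Xm else 1\<^sub>m 2) $$ (a,b) =
     (if sim t a b then (if qbit a c = 1 then Xm else 1\<^sub>m 2) $$ (qbit a t, qbit b t) else 0)"
    using a b by (simp add: GM_index)
  have L: "gate_mat n (CNOT c t) $$ (a,b) = (if a = (if qbit b c = 1 then flip t b else b) then 1 else 0)"
    using a b by simp
  show "gate_mat n (CNOT c t) $$ (a,b) = GM n t (\<lambda>a. if qbit a c = 1 then Xm else 1\<^sub>m 2) $$ (a,b)"
  proof (cases "qbit b c = 1")
    case True
    have e: "a = flip t b \<longleftrightarrow> sim t a b \<and> qbit a t = 1 - qbit b t"
      unfolding flip_setb by (rule setb_iff) simp
    show ?thesis unfolding L G using True e sc qbit01[of a t] qbit01[of b t]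
      by (auto simp: Xm_def)
  next
    case False
    have e: "a = b \<longleftrightarrow> sim t a b \<and> qbit a t = qbit b t" using sim_eq by auto
    show ?thesis unfolding L G using False e sc qbit01[of a t] qbit01[of b t]
      by (auto simp: one2)
  qed
qed auto

lemma gate_ctrl:
  assumes "p < 2^n"
  shows "controlled_gate n t p U = GM n t (\<lambda>a. if sim t a p then U else 1\<^sub>m 2)"
proof (rule eq_matI)
  fix a b assume "a < dim_row (GM n t (\<lambda>a. if sim t a p then U else 1\<^sub>m 2))"
    "b < dim_col (GM n t (\<lambda>a. if sim t a p then U else 1\<^sub>m 2))"
  hence a: "a < 2^n" and b: "b < 2^n" by auto
  have c: "(\<forall>q<n. q \<noteq> t \<longrightarrow> qbit a q = qbit p q \<and> qbit b q = qbit p q) \<longleftrightarrow> sim t a p \<and> sim t b p"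
    using sim_iff_qbit_n[OF a assms, of t] sim_iff_qbit_n[OF b assms, of t] by blast
  have L: "controlled_gate n t p U $$ (a,b) = (if sim t a p \<and> sim t b p then U $$ (qbit a t, qbit b t) else (if a = b then 1 else 0))"
    unfolding controlled_gate_def using a b c by simp
  have G: "GM n t (\<lambda>a. if sim t a p then U else 1\<^sub>m 2) $$ (a,b) =
     (if sim t a b then (if sim t a p then U else 1\<^sub>m 2) $$ (qbit a t, qbit b t) else 0)"
    using a b by (simp add: GM_index)
  show "controlled_gate n t p U $$ (a,b) = GM n t (\<lambda>a. if sim t a p then U else 1\<^sub>m 2) $$ (a,b)"
  proof (cases "sim t a p \<and> sim t b p")
    case True
    then have "sim t a b" using sim_sym sim_trans by blast
    then show ?thesis unfolding L G using True by simp
  next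
    case False
    show ?thesis
    proof (cases "sim t a b")
      case True
      then have "\<not> sim t a p" using False sim_sym sim_trans by blast
      moreover have "a = b \<longleftrightarrow> qbit a t = qbit b t" using sim_eq True by auto
      ultimately show ?thesis unfolding L G using True False qbit01[of a t] qbit01[of b t]
        by (auto simp: one2)
    next
      case False
      then have "a \<noteq> b" by auto
      moreover have "\<not> (sim t a p \<and> sim t b p)" using False sim_sym sim_trans by blast
      ultimately show ?thesis unfolding L G using False by auto
    qed
  qed
qed (auto simp: controlled_gate_def)


definition umat :: "nat \<Rightarrow> complex mat \<Rightarrow> bool" where
  "umat m A \<longleftrightarrow> A \<in> carrier_mat m m \<and> mat_adjoint A * A = 1\<^sub>m m"

lemma GM_umat:
  assumes "t < n" "invar t B" "\<And>a. unitary2 (B a)"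
  shows "umat (2^n) (GM n t B)"
proof -
  have c: "\<And>a. B a \<in> carrier_mat 2 2" using assms(3) unitary2_carrier by blast
  have "mat_adjoint (GM n t B) * GM n t B = GM n t (\<lambda>a. mat_adjoint (B a)) * GM n t B"
    using GM_adj[OF assms(2) c] by simp
  also have "\<dots> = GM n t (\<lambda>a. mat_adjoint (B a) * B a)"
    by (rule GM_mult[OF assms(1) assms(2)]) (auto simp: adj_carrier c)
  also have "\<dots> = GM n t (\<lambda>_. 1\<^sub>m 2)" using assms(3) unfolding unitary2_def by simp
  also have "\<dots> = 1\<^sub>m (2^n)" by (rule GM_one[OF assms(1)])
  finally show ?thesis unfolding umat_def by simp
qed

lemma invar_const: "invar t (\<lambda>_. U)" unfolding invar_def by simp

lemma invar_qbit: "c \<noteq> t \<Longrightarrow> invar t (\<lambda>a. f (qbit a c))"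
  unfolding invar_def using sim_qbit_other by metis

lemma gate_carrier[simp]: "gate_mat n g \<in> carrier_mat (2^n) (2^n)"
  by (cases g) auto

lemma gate_umat: "wf_gate n g \<Longrightarrow> umat (2^n) (gate_mat n g)"
proof (cases g)
  case (Single t U)
  assume "wf_gate n g"
  then have tU: "t < n" "unitary2 U" using Single by auto
  have "umat (2^n) (GM n t (\<lambda>_. U))" by (rule GM_umat[OF tU(1) invar_const]) (use tU in simp)
  then show ?thesis unfolding Single gate_single .
next
  case (CNOT c t)
  assume w: "wf_gate n g"
  then have ct: "c \<noteq> t" "t < n" using CNOT by auto
  have "umat (2^n) (GM n t (\<lambda>a. if qbit a c = 1 then Xm else 1\<^sub>m 2))"
    by (rule GM_umat[OF ct(2)]) (auto intro: invar_qbit[OF ct(1)] simp: unitary2_Xm unitary2_one)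
  then show ?thesis using CNOT gate_cnot[OF ct(1)] by simp
qed

lemma circuit_carrier[simp]: "circuit_mat n C \<in> carrier_mat (2^n) (2^n)"
  by (induction C) auto

lemma circuit_append: "circuit_mat n (C1 @ C2) = circuit_mat n C2 * circuit_mat n C1"
proof (induction C1)
  case Nil
  then show ?case using right_mult_one_mat[of "circuit_mat n C2" "2^n" "2^n"] by simp
next
  case (Cons g C1)
  have "circuit_mat n ((g # C1) @ C2) = circuit_mat n C2 * circuit_mat n C1 * gate_mat n g"
    using Cons by simp
  also have "\<dots> = circuit_mat n C2 * (circuit_mat n C1 * gate_mat n g)"
    by (rule assoc_mult_mat[of _ "2^n" "2^n" _ "2^n" _ "2^n"]) auto
  finally show ?case by simp
qed

lemma cnot_count_append[simp]: "cnot_count (C1 @ C2) = cnot_count C1 + cnot_count C2"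
  unfolding cnot_count_def by simp

lemma wf_circuit_append[simp]: "wf_circuit n (C1 @ C2) \<longleftrightarrow> wf_circuit n C1 \<and> wf_circuit n C2"
  unfolding wf_circuit_def by auto

lemma np:
  assumes "umat m A" "v \<in> carrier_vec m"
  shows "(A *\<^sub>v v) \<bullet>c (A *\<^sub>v v) = v \<bullet>c v"
proof -
  have A: "A \<in> carrier_mat m m" and U: "mat_adjoint A * A = 1\<^sub>m m" using assms(1) unfolding umat_def by auto
  have dv: "dim_vec v = m" using assms(2) by simp
  have S: "(\<Sum>i<m. cnj (A $$ (i,l)) * A $$ (i,j)) = (if l = j then 1 else 0)" if "l < m" "j < m" for l j
  proof -
    have "(mat_adjoint A * A) $$ (l,j) = (\<Sum>i<m. cnj (A $$ (i,l)) * A $$ (i,j))"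
      using that A by (simp add: scalar_prod_def adj_index lessThan_atLeast0)
    thus ?thesis using U that by simp
  qed
  have Av: "(A *\<^sub>v v) $ i = (\<Sum>j<m. A $$ (i,j) * v $ j)" if "i < m" for i
    using that A dv by (simp add: scalar_prod_def lessThan_atLeast0)
  have "(A *\<^sub>v v) \<bullet>c (A *\<^sub>v v) = (\<Sum>i<m. (A *\<^sub>v v) $ i * cnj ((A *\<^sub>v v) $ i))"
    using A by (simp add: scalar_prod_def lessThan_atLeast0)
  also have "\<dots> = (\<Sum>i<m. (\<Sum>j<m. A $$ (i,j) * v $ j) * (\<Sum>l<m. cnj (A $$ (i,l)) * cnj (v $ l)))"
    by (rule sum.cong) (simp_all add: Av cnj_sum)
  also have "\<dots> = (\<Sum>i<m. \<Sum>j<m. \<Sum>l<m. v $ j * cnj (v $ l) * (cnj (A $$ (i,l)) * A $$ (i,j)))"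
    by (simp add: sum_product ac_simps)
  also have "\<dots> = (\<Sum>j<m. \<Sum>l<m. \<Sum>i<m. v $ j * cnj (v $ l) * (cnj (A $$ (i,l)) * A $$ (i,j)))"
    by (subst sum.swap, subst (2) sum.swap, rule refl)
  also have "\<dots> = (\<Sum>j<m. \<Sum>l<m. v $ j * cnj (v $ l) * (if l = j then 1 else 0))"
    by (intro sum.cong refl) (simp add: sum_distrib_left[symmetric] S)
  also have "\<dots> = (\<Sum>j<m. v $ j * cnj (v $ j))"
    by (intro sum.cong refl) (simp add: if_distrib cong: if_cong)
  also have "\<dots> = v \<bullet>c v" using dv by (simp add: scalar_prod_def lessThan_atLeast0)
  finally show ?thesis .
qed

lemma circuit_np:
  assumes "wf_circuit n C" "v \<in> carrier_vec (2^n)"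
  shows "(circuit_mat n C *\<^sub>v v) \<bullet>c (circuit_mat n C *\<^sub>v v) = v \<bullet>c v"
  using assms
proof (induction C arbitrary: v)
  case Nil
  then show ?case by simp
next
  case (Cons g C)
  have wg: "wf_gate n g" and wC: "wf_circuit n C" using Cons.prems unfolding wf_circuit_def by auto
  have e: "circuit_mat n (g # C) *\<^sub>v v = circuit_mat n C *\<^sub>v (gate_mat n g *\<^sub>v v)"
    using Cons.prems by (simp add: assoc_mult_mat_vec[of _ "2^n" "2^n" _ "2^n"])
  have "(circuit_mat n C *\<^sub>v (gate_mat n g *\<^sub>v v)) \<bullet>c (circuit_mat n C *\<^sub>v (gate_mat n g *\<^sub>v v)) = (gate_mat n g *\<^sub>v v) \<bullet>c (gate_mat n g *\<^sub>v v)"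
    by (rule Cons.IH[OF wC mult_mat_vec_carrier[OF gate_carrier Cons.prems(2)]])
  also have "\<dots> = v \<bullet>c v" by (rule np[OF gate_umat[OF wg] Cons.prems(2)])
  finally show ?case using e by simp
qed


definition ph :: "complex \<Rightarrow> complex" where
  "ph z = (if z = 0 then 1 else z / complex_of_real (cmod z))"

lemma cnj_z_z: "cnj z * z = complex_of_real ((cmod z)^2)"
  using complex_norm_square[of z] by (simp add: mult.commute)

lemma ph_abs: "cnj (ph z) * z = complex_of_real (cmod z)"
proof (cases "z = 0")
  case True then show ?thesis by (simp add: ph_def)
next
  case False
  hence nz: "complex_of_real (cmod z) \<noteq> 0" by simp
  have "cnj (ph z) * z = cnj z * z / complex_of_real (cmod z)" using False by (simp add: ph_def)
  also have "\<dots> = complex_of_real ((cmod z)^2) / complex_of_real (cmod z)" by (simp only: cnj_z_z)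
  also have "\<dots> = complex_of_real (cmod z)" using nz by (simp add: power2_eq_square)
  finally show ?thesis .
qed

lemma ph_abs2: "ph z * complex_of_real (cmod z) = z"
  by (cases "z = 0") (simp_all add: ph_def)

lemma cmod_ph: "cmod (ph z) = 1"
  by (cases "z = 0") (simp_all add: ph_def norm_divide)

lemma unit_cnj: "cmod x = 1 \<Longrightarrow> cnj x * x = 1"
  using cnj_z_z[of x] by simp

lemma unit_cnj2: "cmod x = 1 \<Longrightarrow> x * cnj x = 1"
  using unit_cnj[of x] by (simp add: mult.commute)

definition diagu :: "complex mat \<Rightarrow> bool" where
  "diagu E \<longleftrightarrow> (\<exists>x y. E = m2 x 0 0 y \<and> cmod x = 1 \<and> cmod y = 1)"

lemma diagu_one: "diagu (1\<^sub>m 2)" unfolding diagu_def one2 by (rule exI[of _ 1], rule exI[of _ 1]) simp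

lemma refl_V:
  fixes a :: real and \<beta> :: complex
  assumes "0 \<le> a" "a^2 + (cmod \<beta>)^2 = 1"
  shows "\<exists>V. unitary2 V \<and> V * Zm * mat_adjoint V = m2 (complex_of_real a) \<beta> (cnj \<beta>) (- complex_of_real a)"
proof -
  have a1: "a \<le> 1" using assms
    by (metis abs_of_nonneg add.commute add_le_same_cancel2 le_add_same_cancel2 power2_le_imp_le one_power2 zero_le_power2)
  define c where "c = sqrt ((1 + a) / 2)"
  define s where "s = sqrt ((1 - a) / 2)"
  have cc: "c * c = (1 + a) / 2" unfolding c_def using assms(1) by simp
  have ss: "s * s = (1 - a) / 2" unfolding s_def using a1 by simp
  have cs: "2 * (c * s) = cmod \<beta>"
  proof -
    have "c * s = sqrt ((1 + a) / 2 * ((1 - a) / 2))" unfolding c_def s_def by (simp only: real_sqrt_mult)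
    also have "(1 + a) / 2 * ((1 - a) / 2) = (cmod \<beta> / 2)^2" using assms(2) by (simp add: power2_eq_square field_simps)
    finally show ?thesis by simp
  qed
  define e where "e = ph \<beta>"
  have ee: "e * cnj e = 1" "cnj e * e = 1" unfolding e_def using cmod_ph unit_cnj unit_cnj2 by auto
  have eb: "e * complex_of_real (cmod \<beta>) = \<beta>" unfolding e_def by (rule ph_abs2)
  have eb2: "cnj e * complex_of_real (cmod \<beta>) = cnj \<beta>" using arg_cong[OF eb, of cnj] by simp
  define C where "C = complex_of_real c"
  define S where "S = complex_of_real s"
  have CC: "C * C = (1 + complex_of_real a) / 2" unfolding C_def using arg_cong[OF cc, of complex_of_real] by simp
  have SS: "S * S = (1 - complex_of_real a) / 2" unfolding S_def using arg_cong[OF ss, of complex_of_real] by simp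
  have CS: "2 * (C * S) = complex_of_real (cmod \<beta>)" unfolding C_def S_def using arg_cong[OF cs, of complex_of_real] by simp
  have cC: "cnj C = C" "cnj S = S" unfolding C_def S_def by simp_all
  define V where "V = m2 C (- (e * S)) (cnj e * S) C"
  have adjV: "mat_adjoint V = m2 C (e * S) (- (cnj e * S)) C" unfolding V_def by (simp add: cC)
  have "unitary2 V"
  proof -
    have 1: "cnj C * C + cnj (cnj e * S) * (cnj e * S) = 1"
    proof -
      have "cnj C * C + cnj (cnj e * S) * (cnj e * S) = C * C + (e * cnj e) * (S * S)" by (simp add: cC ac_simps)
      also have "\<dots> = 1" unfolding ee CC SS by (simp add: field_simps)
      finally show ?thesis .
    qed
    have 2: "cnj C * (- (e * S)) + cnj (cnj e * S) * C = 0" by (simp add: cC ac_simps)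
    have 3: "cnj (- (e * S)) * C + cnj C * (cnj e * S) = 0" by (simp add: cC ac_simps)
    have 4: "cnj (- (e * S)) * (- (e * S)) + cnj C * C = 1"
    proof -
      have "cnj (- (e * S)) * (- (e * S)) + cnj C * C = C * C + (cnj e * e) * (S * S)" by (simp add: cC ac_simps)
      also have "\<dots> = 1" unfolding ee CC SS by (simp add: field_simps)
      finally show ?thesis .
    qed
    show ?thesis unfolding V_def unitary2_m2 using 1 2 3 4 by simp
  qed
  moreover have "V * Zm * mat_adjoint V = m2 (complex_of_real a) \<beta> (cnj \<beta>) (- complex_of_real a)"
  proof -
    have "V * Zm * mat_adjoint V = m2 (C * C - (e * cnj e) * (S * S)) (e * (2 * (C * S))) (cnj e * (2 * (C * S))) ((cnj e * e) * (S * S) - C * C)"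
      unfolding adjV unfolding V_def Zm_def by (simp add: m2_eq_iff algebra_simps)
    also have "\<dots> = m2 (complex_of_real a) \<beta> (cnj \<beta>) (- complex_of_real a)"
      unfolding CS ee eb eb2 CC SS by (simp add: m2_eq_iff field_simps)
    finally show ?thesis .
  qed
  ultimately show ?thesis by blast
qed


lemma assoc2: "A \<in> carrier_mat 2 2 \<Longrightarrow> B \<in> carrier_mat 2 2 \<Longrightarrow> C \<in> carrier_mat 2 2 \<Longrightarrow> A * B * C = A * (B * C)"
  by (rule assoc_mult_mat)

lemma real_of_complex_eq: "cnj x * x + cnj y * y = 1 \<Longrightarrow> (cmod x)^2 + (cmod y)^2 = 1"
proof -
  assume "cnj x * x + cnj y * y = 1"
  hence "complex_of_real ((cmod x)^2 + (cmod y)^2) = 1" unfolding cnj_z_z by simp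
  thus ?thesis using of_real_eq_1_iff by blast
qed

lemma dec2:
  assumes U0: "unitary2 U0" and U1: "unitary2 U1"
  shows "\<exists>E0 E1 V W. diagu E0 \<and> diagu E1 \<and> unitary2 V \<and> unitary2 W \<and> E0 * U0 = V * W \<and> E1 * U1 = V * Zm * W"
proof -
  define M where "M = U1 * mat_adjoint U0"
  have uM: "unitary2 M" unfolding M_def by (rule unitary2_mult[OF U1 unitary2_adj[OF U0]])
  obtain p q r s where Md: "M = m2 p q r s" using m2_obtain[OF unitary2_carrier[OF uM]] by blast
  have A: "cnj p * p + cnj r * r = 1" "cnj p * q + cnj r * s = 0" "cnj q * q + cnj s * s = 1"
    using uM unfolding Md unitary2_m2 by auto
  have "M * mat_adjoint M = 1\<^sub>m 2" by (rule unitary2_right[OF uM])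
  hence B: "p * cnj p + q * cnj q = 1" unfolding Md one2 by (simp add: m2_eq_iff)
  have B': "cnj p * p + cnj q * q = 1" using B by (simp add: mult.commute)
  have R1: "(cmod p)^2 + (cmod r)^2 = 1" by (rule real_of_complex_eq[OF A(1)])
  have R2: "(cmod p)^2 + (cmod q)^2 = 1" by (rule real_of_complex_eq[OF B'])
  have R3: "(cmod q)^2 + (cmod s)^2 = 1" by (rule real_of_complex_eq[OF A(3)])
  have "(cmod r)^2 = (cmod q)^2" using R1 R2 by linarith
  hence rq: "cmod r = cmod q" by (rule power2_eq_imp_eq[OF _ norm_ge_zero norm_ge_zero])
  have "(cmod s)^2 = (cmod p)^2" using R2 R3 by linarith
  hence sp: "cmod s = cmod p" by (rule power2_eq_imp_eq[OF _ norm_ge_zero norm_ge_zero])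
  have C: "p * cnj q = - (r * cnj s)"
  proof -
    have "cnj (cnj p * q + cnj r * s) = 0" using A(2) by simp
    thus ?thesis by (simp add: add_eq_0_iff mult.commute)
  qed
  define u where "u = cnj (ph p)"
  define w where "w = (if p = 0 then cnj (u * q) * cnj r else - cnj (ph s))"
  have up: "u * p = complex_of_real (cmod p)" unfolding u_def by (rule ph_abs)
  have cu: "cmod u = 1" unfolding u_def using cmod_ph by simp
  have key: "w * s = - complex_of_real (cmod p) \<and> w * r = cnj (u * q) \<and> cmod w = 1"
  proof (cases "p = 0")
    case True
    hence "cmod s = 0" using sp by simp
    hence s0: "s = 0" by simp
    have u1: "u = 1" unfolding u_def using True by (simp add: ph_def)
    have "(cmod r)^2 = 1^2" using R1 True by simp
    hence cr: "cmod r = 1" by (rule power2_eq_imp_eq[OF _ norm_ge_zero]) simp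
    hence cq: "cmod q = 1" using rq by simp
    have "w * r = cnj q * (cnj r * r)" unfolding w_def using True u1 by (simp add: ac_simps)
    also have "\<dots> = cnj q" using unit_cnj[OF cr] by simp
    finally have wr: "w * r = cnj (u * q)" using u1 by simp
    have "cmod w = 1" unfolding w_def using True u1 cr cq by (simp add: norm_mult)
    then show ?thesis using wr s0 True by simp
  next
    case False
    hence pn: "cmod p \<noteq> 0" by simp
    hence sn: "s \<noteq> 0" using sp by auto
    have ws: "w * s = - complex_of_real (cmod p)" unfolding w_def using False ph_abs[of s] sp by simp
    have "cnj (u * q) = ph p * cnj q" unfolding u_def by simp
    also have "\<dots> = p * cnj q / complex_of_real (cmod p)" using False by (simp add: ph_def)
    also have "\<dots> = - (r * cnj s) / complex_of_real (cmod s)" unfolding C sp by simp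
    also have "\<dots> = w * r" unfolding w_def using False sn by (simp add: ph_def)
    finally have wr: "w * r = cnj (u * q)" by simp
    have "cmod w = 1" unfolding w_def using False cmod_ph by simp
    then show ?thesis using ws wr by simp
  qed
  define E1 where "E1 = m2 u 0 0 w"
  have dE1: "diagu E1" unfolding E1_def diagu_def using cu key by blast
  have R: "E1 * M = m2 (complex_of_real (cmod p)) (u * q) (cnj (u * q)) (- complex_of_real (cmod p))"
    unfolding E1_def Md using up key by (simp add: m2_eq_iff)
  have sq: "(cmod p)^2 + (cmod (u * q))^2 = 1" using R2 cu by (simp add: norm_mult)
  obtain V where uV: "unitary2 V" and VR: "V * Zm * mat_adjoint V = m2 (complex_of_real (cmod p)) (u * q) (cnj (u * q)) (- complex_of_real (cmod p))"
    using refl_V[OF norm_ge_zero sq] by blast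
  define W where "W = mat_adjoint V * U0"
  have uW: "unitary2 W" unfolding W_def by (rule unitary2_mult[OF unitary2_adj[OF uV] U0])
  have cV: "V \<in> carrier_mat 2 2" and cU0: "U0 \<in> carrier_mat 2 2" and cU1: "U1 \<in> carrier_mat 2 2"
    and caV: "mat_adjoint V \<in> carrier_mat 2 2" and caU0: "mat_adjoint U0 \<in> carrier_mat 2 2"
    using uV U0 U1 unitary2_carrier adj_carrier by blast+
  have cE1: "E1 \<in> carrier_mat 2 2" unfolding E1_def by simp
  have cM: "M \<in> carrier_mat 2 2" unfolding Md by simp
  have cZ: "Zm \<in> carrier_mat 2 2" unfolding Zm_def by simp
  have e0: "1\<^sub>m 2 * U0 = V * W"
  proof -
    have "V * W = V * mat_adjoint V * U0" unfolding W_def by (rule assoc2[symmetric, OF cV caV cU0])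
    also have "\<dots> = U0" using unitary2_right[OF uV] cU0 by simp
    finally show ?thesis using cU0 by simp
  qed
  have MU: "M * U0 = U1"
  proof -
    have "M * U0 = U1 * (mat_adjoint U0 * U0)" unfolding M_def by (rule assoc2[OF cU1 caU0 cU0])
    also have "\<dots> = U1" using U0 cU1 unfolding unitary2_def by simp
    finally show ?thesis .
  qed
  have e1: "E1 * U1 = V * Zm * W"
  proof -
    have "E1 * U1 = E1 * M * U0" unfolding MU[symmetric] by (rule assoc2[symmetric, OF cE1 cM cU0])
    also have "\<dots> = V * Zm * mat_adjoint V * U0" unfolding R VR[symmetric] ..
    also have "\<dots> = V * Zm * W" unfolding W_def
      by (rule assoc2) (use cV cZ caV cU0 in auto)
    finally show ?thesis .
  qed
  show ?thesis using diagu_one dE1 uV uW e0 e1 by blast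
qed


definition MX :: "nat \<Rightarrow> nat \<Rightarrow> nat \<Rightarrow> (nat \<Rightarrow> complex mat) \<Rightarrow> complex mat" where
  "MX n t j G = GM n t (\<lambda>a. G (a div 2^(Suc t) mod 2^j))"

lemma invar_key: "invar t (\<lambda>a. G (a div 2^(Suc t) mod 2^j))"
  unfolding invar_def sim_def by simp

lemma key_lt: "a div 2^(Suc t) mod 2^j < (2::nat)^j" by simp

lemma key_Suc: "a div 2^(Suc t) mod 2^(Suc j) = a div 2^(Suc t) mod 2^j + 2^j * qbit a (t + Suc j)"
proof -
  have "a div 2^(Suc t) mod (2^j * 2) = 2^j * (a div 2^(Suc t) div 2^j mod 2) + a div 2^(Suc t) mod 2^j"
    by (rule mod_mult2_eq)
  moreover have "a div 2^(Suc t) div 2^j = a div 2^(t + Suc j)"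
  proof -
    have p: "(2::nat)^(Suc t) * 2^j = 2^(t + Suc j)" by (simp only: power_add[symmetric]) simp
    have "a div 2^(Suc t) div 2^j = a div (2^(Suc t) * 2^j)" by (simp only: div_mult2_eq)
    thus ?thesis unfolding p .
  qed
  ultimately show ?thesis unfolding qbit_def by (simp add: power_Suc2)
qed

lemma mult2_carrier[simp]: "A \<in> carrier_mat 2 2 \<Longrightarrow> B \<in> carrier_mat 2 2 \<Longrightarrow> A * B \<in> carrier_mat 2 2"
  by (rule mult_carrier_mat)

lemma diagu_carrier: "diagu E \<Longrightarrow> E \<in> carrier_mat 2 2" unfolding diagu_def by auto

lemma diagu_unitary: "diagu E \<Longrightarrow> unitary2 E"
proof -
  assume "diagu E"
  then obtain x y where E: "E = m2 x 0 0 y" "cmod x = 1" "cmod y = 1" unfolding diagu_def by blast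
  show ?thesis unfolding E(1) unitary2_m2 using unit_cnj[OF E(2)] unit_cnj[OF E(3)] by simp
qed

lemma diagu_mult: "diagu A \<Longrightarrow> diagu B \<Longrightarrow> diagu (A * B)"
proof -
  assume "diagu A" "diagu B"
  then obtain x y x' y' where A: "A = m2 x 0 0 y" "cmod x = 1" "cmod y = 1"
    and B: "B = m2 x' 0 0 y'" "cmod x' = 1" "cmod y' = 1" unfolding diagu_def by blast
  have "A * B = m2 (x * x') 0 0 (y * y')" unfolding A(1) B(1) by simp
  moreover have "cmod (x * x') = 1" "cmod (y * y') = 1" using A B by (simp_all add: norm_mult)
  ultimately show ?thesis unfolding diagu_def by blast
qed

lemma DZD:
  assumes "diagu D" "W \<in> carrier_mat 2 2"
  shows "mat_adjoint D * (m2 z1 0 0 z2 * (D * W)) = m2 z1 0 0 z2 * W"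
proof -
  obtain x y where D: "D = m2 x 0 0 y" "cmod x = 1" "cmod y = 1" using assms(1) unfolding diagu_def by blast
  have x: "cnj x * x = 1" "cnj y * y = 1" using unit_cnj D by auto
  obtain w1 w2 w3 w4 where W: "W = m2 w1 w2 w3 w4" using m2_obtain[OF assms(2)] by blast
  have e: "cnj u * (z * (u * w)) = z * w" if "cnj u * u = 1" for u z w
  proof -
    have "cnj u * (z * (u * w)) = (cnj u * u) * (z * w)" by (simp only: ac_simps)
    thus ?thesis using that by simp
  qed
  show ?thesis unfolding D W using e x by (simp add: m2_eq_iff)
qed

lemma block_eq:
  assumes "diagu EW" "unitary2 V" "unitary2 W" "EV \<in> carrier_mat 2 2"
  shows "EV * (V * mat_adjoint EW) * m2 z1 0 0 z2 * (EW * W) = EV * (V * (m2 z1 0 0 z2 * W))"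
proof -
  have c: "EW \<in> carrier_mat 2 2" "V \<in> carrier_mat 2 2" "W \<in> carrier_mat 2 2" "mat_adjoint EW \<in> carrier_mat 2 2"
    using assms diagu_carrier unitary2_carrier adj_carrier by blast+
  have Z: "m2 z1 0 0 z2 \<in> carrier_mat 2 2" by simp
  have "EV * (V * mat_adjoint EW) * m2 z1 0 0 z2 * (EW * W) = EV * (V * (mat_adjoint EW * (m2 z1 0 0 z2 * (EW * W))))"
    using c Z assms(4) by (simp add: assoc2)
  also have "\<dots> = EV * (V * (m2 z1 0 0 z2 * W))" using DZD[OF assms(1) c(3)] by simp
  finally show ?thesis .
qed

lemma mid_sem:
  assumes "c \<noteq> t" "t < n"
  shows "circuit_mat n [Single t Hm, CNOT c t, Single t Hm] = GM n t (\<lambda>a. m2 1 0 0 (if qbit a c = 1 then -1 else 1))"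
proof -
  have cH: "Hm \<in> carrier_mat 2 2" unfolding Hm_def by simp
  have cX: "\<And>a. (if qbit a c = 1 then Xm else 1\<^sub>m 2) \<in> carrier_mat 2 2" unfolding Xm_def one2 by simp
  have "circuit_mat n [Single t Hm, CNOT c t, Single t Hm] = GM n t (\<lambda>_. Hm) * GM n t (\<lambda>a. if qbit a c = 1 then Xm else 1\<^sub>m 2) * GM n t (\<lambda>_. Hm)"
    by (simp only: circuit_mat.simps gate_single gate_cnot[OF assms(1)] left_mult_one_mat[OF GM_carrier])
  also have "\<dots> = GM n t (\<lambda>a. Hm * (if qbit a c = 1 then Xm else 1\<^sub>m 2)) * GM n t (\<lambda>_. Hm)"
    by (subst GM_mult[OF assms(2) invar_qbit[OF assms(1)]]) (use cH cX in auto)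
  also have "\<dots> = GM n t (\<lambda>a. Hm * (if qbit a c = 1 then Xm else 1\<^sub>m 2) * Hm)"
    by (rule GM_mult[OF assms(2) invar_const]) (use cH cX in auto)
  also have "\<dots> = GM n t (\<lambda>a. m2 1 0 0 (if qbit a c = 1 then -1 else 1))"
    by (rule GM_cong) (auto simp: HXH HIH[unfolded one2] Zm_def one2)
  finally show ?thesis .
qed


lemma cnot_count_single[simp]: "cnot_count [Single t U] = 0" unfolding cnot_count_def by simp

lemma cnot_count_mid: "cnot_count [Single t Hm, CNOT c t, Single t Hm] = 1" unfolding cnot_count_def by simp

lemma ucg:
  "t + j < n \<Longrightarrow> (\<And>h. h < 2^j \<Longrightarrow> unitary2 (F h)) \<Longrightarrow>
   \<exists>C E. wf_circuit n C \<and> cnot_count C \<le> 2^j - 1 \<and> (\<forall>h<2^j. diagu (E h)) \<and>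
         circuit_mat n C = MX n t j (\<lambda>h. E h * F h)"
proof (induction j arbitrary: F)
  case 0
  have tn: "t < n" using 0 by simp
  have uF: "unitary2 (F 0)" using 0 by simp
  have cF: "F 0 \<in> carrier_mat 2 2" using unitary2_carrier[OF uF] .
  have "circuit_mat n [Single t (F 0)] = GM n t (\<lambda>_. F 0)"
    by (simp only: circuit_mat.simps gate_single left_mult_one_mat[OF GM_carrier])
  also have "\<dots> = MX n t 0 (\<lambda>h. 1\<^sub>m 2 * F h)"
    unfolding MX_def by (rule GM_cong) (simp add: left_mult_one_mat[OF cF])
  finally have "circuit_mat n [Single t (F 0)] = MX n t 0 (\<lambda>h. 1\<^sub>m 2 * F h)" .
  moreover have "wf_circuit n [Single t (F 0)]" unfolding wf_circuit_def using tn uF by simp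
  moreover have "cnot_count [Single t (F 0)] \<le> 2^0 - 1" by simp
  moreover have "\<forall>h<(2::nat)^0. diagu (1\<^sub>m 2)" using diagu_one by simp
  ultimately show ?case
    apply (rule_tac exI[of _ "[Single t (F 0)]"], rule_tac exI[of _ "\<lambda>_. 1\<^sub>m 2"])
    by blast
next
  case (Suc j)
  have tj: "t + j < n" using Suc.prems(1) by simp
  define cq where "cq = t + Suc j"
  have cq: "cq < n" "cq \<noteq> t" unfolding cq_def using Suc.prems(1) by auto
  have tn: "t < n" using Suc.prems(1) by simp
  define P where "P = (\<lambda>h' (x :: complex mat \<times> complex mat \<times> complex mat \<times> complex mat).
      diagu (fst x) \<and> diagu (fst (snd x)) \<and> unitary2 (fst (snd (snd x))) \<and> unitary2 (snd (snd (snd x))) \<and>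
      fst x * F h' = fst (snd (snd x)) * snd (snd (snd x)) \<and>
      fst (snd x) * F (h' + 2^j) = fst (snd (snd x)) * Zm * snd (snd (snd x)))"
  have ex: "\<exists>x. P h' x" if "h' < 2^j" for h'
  proof -
    have "unitary2 (F h')" "unitary2 (F (h' + 2^j))" using Suc.prems(2) that by auto
    then obtain E0 E1 V W where "diagu E0 \<and> diagu E1 \<and> unitary2 V \<and> unitary2 W \<and> E0 * F h' = V * W \<and> E1 * F (h' + 2^j) = V * Zm * W"
      using dec2 by blast
    thus ?thesis unfolding P_def by (intro exI[of _ "(E0, E1, V, W)"]) simp
  qed
  define f where "f h' = (SOME x. P h' x)" for h'
  have f: "P h' (f h')" if "h' < 2^j" for h' unfolding f_def using someI_ex[OF ex[OF that]] .
  define E0f where "E0f h = fst (f h)" for h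
  define E1f where "E1f h = fst (snd (f h))" for h
  define Vf where "Vf h = fst (snd (snd (f h)))" for h
  define Wf where "Wf h = snd (snd (snd (f h)))" for h
  have fE0: "diagu (E0f h)" and fE1: "diagu (E1f h)" and fV: "unitary2 (Vf h)" and fW: "unitary2 (Wf h)"
    and fd0: "E0f h * F h = Vf h * Wf h" and fd1: "E1f h * F (h + 2^j) = Vf h * Zm * Wf h"
    if "h < 2^j" for h using f[OF that] unfolding P_def E0f_def E1f_def Vf_def Wf_def by auto
  obtain CW EW where CW: "wf_circuit n CW" "cnot_count CW \<le> 2^j - 1" "\<forall>h<2^j. diagu (EW h)"
    "circuit_mat n CW = MX n t j (\<lambda>h. EW h * Wf h)"
    using Suc.IH[of Wf, OF tj fW] by blast
  define V' where "V' h = Vf h * mat_adjoint (EW h)" for h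
  have uV': "unitary2 (V' h)" if "h < 2^j" for h
    unfolding V'_def using unitary2_mult[OF fV[OF that] unitary2_adj[OF diagu_unitary]] CW(3) that by blast
  obtain CV EV where CV: "wf_circuit n CV" "cnot_count CV \<le> 2^j - 1" "\<forall>h<2^j. diagu (EV h)"
    "circuit_mat n CV = MX n t j (\<lambda>h. EV h * V' h)"
    using Suc.IH[of V', OF tj uV'] by blast
  define mid where "mid = [Single t Hm, CNOT cq t, Single t Hm]"
  define C where "C = CW @ mid @ CV"
  define E where "E h = EV (h mod 2^j) * (if h < 2^j then E0f h else E1f (h - 2^j))" for h :: nat
  have wfC: "wf_circuit n C" unfolding C_def mid_def using CW(1) CV(1) cq tn unitary2_Hm
    by (auto simp: wf_circuit_def)
  have cntC: "cnot_count C \<le> 2^(Suc j) - 1"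
  proof -
    have "cnot_count C = cnot_count CW + 1 + cnot_count CV" unfolding C_def mid_def
      by (simp add: cnot_count_def)
    also have "\<dots> \<le> (2^j - 1) + 1 + (2^j - 1)" using CW(2) CV(2) by linarith
    also have "\<dots> = 2^(Suc j) - 1"
    proof -
      have "(1::nat) \<le> 2^j" by simp
      thus ?thesis by (simp add: power_Suc)
    qed
    finally show ?thesis .
  qed
  have dE: "\<forall>h<2^(Suc j). diagu (E h)"
  proof (intro allI impI)
    fix h :: nat assume h: "h < 2^(Suc j)"
    have "h mod 2^j < 2^j" by simp
    moreover have "h - 2^j < 2^j" if "\<not> h < 2^j" using h that by (simp add: power_Suc)
    ultimately show "diagu (E h)" unfolding E_def using CV(3) fE0 fE1 by (auto intro!: diagu_mult)
  qed
  let ?k = "\<lambda>a::nat. a div 2^(Suc t) mod 2^j"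
  define Zc where "Zc a = m2 1 0 0 (if qbit a cq = 1 then -1 else 1)" for a :: nat
  have cEVV: "EV (?k a) * V' (?k a) \<in> carrier_mat 2 2" for a :: nat
    using CV(3) uV' unitary2_carrier diagu_carrier by (simp add: key_lt)
  have cEWW: "EW (?k a) * Wf (?k a) \<in> carrier_mat 2 2" for a :: nat
    using CW(3) fW unitary2_carrier diagu_carrier by (simp add: key_lt)
  have cZc: "Zc a \<in> carrier_mat 2 2" for a unfolding Zc_def by simp
  have invZ: "invar t Zc" unfolding Zc_def by (rule invar_qbit[OF cq(2)])
  have "circuit_mat n C = circuit_mat n CV * circuit_mat n mid * circuit_mat n CW"
    unfolding C_def by (simp add: circuit_append)
  also have "\<dots> = MX n t j (\<lambda>h. EV h * V' h) * GM n t Zc * MX n t j (\<lambda>h. EW h * Wf h)"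
    unfolding CV(4) CW(4) mid_def mid_sem[OF cq(2) tn] Zc_def ..
  also have "\<dots> = GM n t (\<lambda>a. EV (?k a) * V' (?k a) * Zc a) * MX n t j (\<lambda>h. EW h * Wf h)"
    unfolding MX_def by (subst GM_mult[OF tn invZ]) (use cEVV cZc in auto)
  also have "\<dots> = GM n t (\<lambda>a. EV (?k a) * V' (?k a) * Zc a * (EW (?k a) * Wf (?k a)))"
    unfolding MX_def by (rule GM_mult[OF tn invar_key]) (use cEVV cZc cEWW in auto)
  also have "\<dots> = MX n t (Suc j) (\<lambda>h. E h * F h)"
    unfolding MX_def
  proof (rule GM_cong)
    fix a :: nat assume "a < 2^n"
    define h' where "h' = ?k a"
    have h': "h' < 2^j" unfolding h'_def by simp
    have K: "a div 2^(Suc t) mod 2^(Suc j) = h' + 2^j * qbit a cq" unfolding h'_def cq_def by (rule key_Suc)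
    have cEV: "EV h' \<in> carrier_mat 2 2" using CV(3) h' diagu_carrier by blast
    have blk: "EV h' * V' h' * Zc a * (EW h' * Wf h') = EV h' * (Vf h' * (Zc a * Wf h'))"
      unfolding V'_def Zc_def by (rule block_eq[OF _ fV[OF h'] fW[OF h'] cEV]) (use CW(3) h' in blast)
    have cE0: "E0f h' \<in> carrier_mat 2 2" "E1f h' \<in> carrier_mat 2 2" using fE0[OF h'] fE1[OF h'] diagu_carrier by auto
    have cF: "F h' \<in> carrier_mat 2 2" "F (h' + 2^j) \<in> carrier_mat 2 2"
      using Suc.prems(2) h' unitary2_carrier by (auto simp: power_Suc)
    have cVW: "Vf h' \<in> carrier_mat 2 2" "Wf h' \<in> carrier_mat 2 2" using fV[OF h'] fW[OF h'] unitary2_carrier by auto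
    show "EV (?k a) * V' (?k a) * Zc a * (EW (?k a) * Wf (?k a)) = E (a div 2^(Suc t) mod 2^(Suc j)) * F (a div 2^(Suc t) mod 2^(Suc j))"
    proof (cases "qbit a cq = 1")
      case True
      have Ek: "E (h' + 2^j) = EV h' * E1f h'" unfolding E_def using h' by simp
      have "E (h' + 2^j) * F (h' + 2^j) = EV h' * (E1f h' * F (h' + 2^j))" unfolding Ek
        by (rule assoc2[OF cEV cE0(2) cF(2)])
      also have "\<dots> = EV h' * (Vf h' * (Zm * Wf h'))" unfolding fd1[OF h']
        using assoc2[OF cVW(1) _ cVW(2), of Zm] by (simp add: Zm_def)
      finally show ?thesis unfolding K h'_def[symmetric] blk using True by (simp add: Zc_def Zm_def)
    next
      case False
      hence q0: "qbit a cq = 0" using qbit01[of a cq] by simp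
      have Ek: "E h' = EV h' * E0f h'" unfolding E_def using h' by simp
      have "E h' * F h' = EV h' * (E0f h' * F h')" unfolding Ek
        by (rule assoc2[OF cEV cE0(1) cF(1)])
      also have "\<dots> = EV h' * (Vf h' * (m2 1 0 0 1 * Wf h'))" unfolding fd0[OF h'] one2[symmetric]
        using cVW(2) by simp
      finally show ?thesis unfolding K h'_def[symmetric] blk using q0 by (simp add: Zc_def)
    qed
  qed
  finally show ?case using wfC cntC dE by blast
qed


lemma m2_index2[simp]: "m2 a b c d $$ (1,Suc 0) = d" "m2 a b c d $$ (Suc 0,1) = d"
  unfolding m2_def by simp_all

definition Z0 :: "complex \<Rightarrow> complex \<Rightarrow> complex mat" where
  "Z0 a b = (if a = 0 \<and> b = 0 then 1\<^sub>m 2 else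
     m2 (cnj a / complex_of_real (sqrt ((cmod a)^2 + (cmod b)^2))) (cnj b / complex_of_real (sqrt ((cmod a)^2 + (cmod b)^2)))
        (- b / complex_of_real (sqrt ((cmod a)^2 + (cmod b)^2))) (a / complex_of_real (sqrt ((cmod a)^2 + (cmod b)^2))))"

lemma Z0_props: "unitary2 (Z0 a b) \<and> Z0 a b $$ (1,0) * a + Z0 a b $$ (1,1) * b = 0"
proof (cases "a = 0 \<and> b = 0")
  case True
  then show ?thesis unfolding Z0_def by (simp add: unitary2_one)
next
  case False
  define r where "r = (cmod a)^2 + (cmod b)^2"
  have rpos: "r > 0" unfolding r_def using False by (auto simp: add_pos_nonneg add_nonneg_pos)
  define d where "d = complex_of_real (sqrt r)"
  have dn: "d \<noteq> 0" unfolding d_def using rpos by simp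
  have cd: "cnj d = d" unfolding d_def by simp
  have dd: "d * d = cnj a * a + cnj b * b" unfolding d_def r_def cnj_z_z using rpos
    by (simp add: of_real_mult[symmetric] r_def del: of_real_mult)
  have Zd: "Z0 a b = m2 (cnj a / d) (cnj b / d) (- b / d) (a / d)" unfolding Z0_def d_def r_def by (simp only: if_not_P[OF False])
  have "d * d \<noteq> 0" using dn by simp
  hence nz: "a * cnj a + b * cnj b \<noteq> 0" using dd by (simp add: mult.commute)
  have nz2: "cnj a * a + cnj b * b \<noteq> 0" using nz by (simp add: mult.commute)
  have dd1: "(a * cnj a + b * cnj b) / (d * d) = 1" unfolding dd using nz2 by (simp add: mult.commute)
  have e1: "cnj (cnj a / d) * (cnj a / d) + cnj (- b / d) * (- b / d) = 1"
  proof -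
    have "cnj (cnj a / d) * (cnj a / d) + cnj (- b / d) * (- b / d) = (a * cnj a + b * cnj b) / (d * d)"
      using cd by (simp add: add_divide_distrib ac_simps)
    thus ?thesis using dd1 by simp
  qed
  have e4: "cnj (cnj b / d) * (cnj b / d) + cnj (a / d) * (a / d) = 1"
  proof -
    have "cnj (cnj b / d) * (cnj b / d) + cnj (a / d) * (a / d) = (a * cnj a + b * cnj b) / (d * d)"
      using cd by (simp add: add_divide_distrib ac_simps)
    thus ?thesis using dd1 by simp
  qed
  have e2: "cnj (cnj a / d) * (cnj b / d) + cnj (- b / d) * (a / d) = 0" using cd by (simp add: field_simps)
  have e3: "cnj (cnj b / d) * (cnj a / d) + cnj (a / d) * (- b / d) = 0" using cd by (simp add: field_simps)
  have u: "unitary2 (Z0 a b)"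
    unfolding Zd unitary2_m2 using e1 e2 e3 e4 by blast
  have "Z0 a b $$ (1,0) * a + Z0 a b $$ (1,1) * b = 0" unfolding Zd by (simp add: field_simps)
  then show ?thesis using u by simp
qed

definition zer :: "nat \<Rightarrow> complex \<Rightarrow> complex \<Rightarrow> complex mat" where
  "zer c a b = (if c = 1 then Xm * Z0 a b else Z0 a b)"

lemma zer_unitary: "unitary2 (zer c a b)"
  unfolding zer_def using Z0_props unitary2_mult unitary2_Xm by auto

lemma zer_row:
  assumes "c < 2"
  shows "zer c a b $$ (1 - c, 0) * a + zer c a b $$ (1 - c, 1) * b = 0"
proof (cases "c = 1")
  case True
  obtain p q r s where Z: "Z0 a b = m2 p q r s" using m2_obtain[OF unitary2_carrier] Z0_props by blast
  have "r * a + s * b = 0" using Z0_props[of a b] unfolding Z by simp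
  then show ?thesis unfolding zer_def using True Z by (simp add: Xm_def)
next
  case False
  hence "c = 0" using assms by simp
  then show ?thesis unfolding zer_def using Z0_props[of a b] by simp
qed

lemma diag_row:
  assumes "diagu E" "Z \<in> carrier_mat 2 2" "r < 2"
  shows "(E * Z) $$ (r, 0) * a + (E * Z) $$ (r, 1) * b = E $$ (r, r) * (Z $$ (r, 0) * a + Z $$ (r, 1) * b)"
proof -
  obtain x y where E: "E = m2 x 0 0 y" using assms(1) unfolding diagu_def by blast
  obtain p q u w where Z: "Z = m2 p q u w" using m2_obtain[OF assms(2)] by blast
  have "r = 0 \<or> r = 1" using assms(3) by linarith
  thus ?thesis unfolding E Z by (auto simp: algebra_simps)
qed

lemma diag_off:
  assumes "diagu E" "r < 2"
  shows "(E * 1\<^sub>m 2) $$ (1 - r, r) = 0" and "cmod ((E * 1\<^sub>m 2) $$ (r, r)) = 1"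
proof -
  obtain x y where E: "E = m2 x 0 0 y" "cmod x = 1" "cmod y = 1" using assms(1) unfolding diagu_def by blast
  have r: "r = 0 \<or> r = 1" using assms(2) by linarith
  show "(E * 1\<^sub>m 2) $$ (1 - r, r) = 0" using r unfolding E one2 by auto
  show "cmod ((E * 1\<^sub>m 2) $$ (r, r)) = 1" using r E(2) E(3) unfolding E(1) one2 by auto
qed

lemma diag_entry_nz:
  assumes "diagu E" "r < 2"
  shows "E $$ (r, r) \<noteq> 0"
proof -
  obtain x y where E: "E = m2 x 0 0 y" "cmod x = 1" "cmod y = 1" using assms(1) unfolding diagu_def by blast
  have r: "r = 0 \<or> r = 1" using assms(2) by linarith
  show ?thesis using r E(2) E(3) unfolding E(1) by auto
qed

lemma key_small:
  assumes "(a::nat) < 2^n" "s < n"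
  shows "a div 2^(Suc s) mod 2^(n - 1 - s) = a div 2^(Suc s)"
proof -
  have nn: "n = (n - 1 - s) + Suc s" using assms(2) by simp
  have e0: "(2::nat)^n = 2^((n - 1 - s) + Suc s)" using nn by (rule arg_cong)
  have e: "2^n = 2^(n - 1 - s) * (2::nat)^(Suc s)" unfolding e0 by (simp only: power_add)
  have "a div 2^(Suc s) < 2^(n - 1 - s)"
    using assms(1) unfolding e by (rule less_mult_imp_div_less)
  thus ?thesis by simp
qed

lemma cmp_hi:
  assumes "H < H'" "\<beta> < 2" "(L::nat) < 2^s"
  shows "H * 2^(Suc s) + \<beta> * 2^s + L < H' * 2^(Suc s) + \<beta>' * 2^s + L'"
proof -
  have "\<beta> * 2^s + L < 2^(Suc s)"
  proof -
    have "\<beta> * 2^s \<le> 1 * 2^s" using assms(2) by (intro mult_right_mono) auto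
    moreover have "(2::nat)^(Suc s) = 2^s + 2^s" by (simp add: power_Suc)
    ultimately show ?thesis using assms(3) by linarith
  qed
  hence "H * 2^(Suc s) + \<beta> * 2^s + L < (H + 1) * 2^(Suc s)" by (simp add: algebra_simps)
  also have "\<dots> \<le> H' * 2^(Suc s)" using assms(1) by (intro mult_right_mono) auto
  finally show ?thesis by linarith
qed

lemma gm_vec_diag:
  assumes "(a::nat) < 2^n" "t < n" "v \<in> carrier_vec (2^n)" "diagu (E h)" "Z \<in> carrier_mat 2 2"
    "\<And>a::nat. a < 2^n \<Longrightarrow> a div 2^(Suc t) mod 2^j = a div 2^(Suc t)"
    "h = a div 2^(Suc t)"
    "\<And>h. Fm h \<in> carrier_mat 2 2" "Fm h = Z"
  shows "(MX n t j (\<lambda>h. E h * Fm h) *\<^sub>v v) $ a =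
    E h $$ (qbit a t, qbit a t) * (Z $$ (qbit a t, 0) * v $ setb t 0 a + Z $$ (qbit a t, 1) * v $ setb t 1 a)"
proof -
  have "(MX n t j (\<lambda>h. E h * Fm h) *\<^sub>v v) $ a = (E h * Z) $$ (qbit a t, 0) * v $ setb t 0 a + (E h * Z) $$ (qbit a t, 1) * v $ setb t 1 a"
    unfolding MX_def using GM_mult_vec[OF assms(1-3)] assms(6)[OF assms(1)] assms(7,9) by simp
  also have "\<dots> = E h $$ (qbit a t, qbit a t) * (Z $$ (qbit a t, 0) * v $ setb t 0 a + Z $$ (qbit a t, 1) * v $ setb t 1 a)"
    by (rule diag_row[OF assms(4,5) qbit_lt2])
  finally show ?thesis .
qed


lemma mod_decomp: "(x::nat) mod 2^(Suc s) = qbit x s * 2^s + x mod 2^s"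
proof -
  have "x mod (2^s * 2) = 2^s * (x div 2^s mod 2) + x mod 2^s" by (rule mod_mult2_eq)
  thus ?thesis unfolding qbit_def by (simp add: power_Suc2 mult.commute)
qed

lemma setb_expand: "setb s \<gamma> x = x div 2^(Suc s) * 2^(Suc s) + \<gamma> * 2^s + x mod 2^s"
  unfolding setb_def ..

lemma one2_row: "r < 2 \<Longrightarrow> 1\<^sub>m 2 $$ (r, 0) * a + 1\<^sub>m 2 $$ (r, 1) * b = (if r = 0 then a else (b::complex))"
proof -
  assume "r < 2" hence "r = 0 \<or> r = 1" by linarith
  thus ?thesis by auto
qed

lemma stepM:
  fixes n k s :: nat and v :: "complex vec"
  assumes sn: "s < n" and kn: "k < 2^n" and v: "v \<in> carrier_vec (2^n)"
    and sup: "\<forall>x<2^n. v $ x \<noteq> 0 \<longrightarrow> x mod 2^s = k mod 2^s \<and> k \<le> x"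
    and Qdef: "Q = (qbit k s = 0 \<and> k mod 2^(Suc s) \<noteq> 0)"
  shows "\<exists>D. wf_circuit n D \<and> cnot_count D \<le> 2^(n-1-s) - 1 \<and>
     (\<forall>i<k. \<exists>c. circuit_mat n D *\<^sub>v unit_vec (2^n) i = c \<cdot>\<^sub>v unit_vec (2^n) i \<and> cmod c = 1) \<and>
     (\<forall>x<2^n. (circuit_mat n D *\<^sub>v v) $ x \<noteq> 0 \<longrightarrow> x mod 2^s = k mod 2^s \<and> k \<le> x \<and>
         (x mod 2^(Suc s) = k mod 2^(Suc s) \<or> (Q \<and> x div 2^(Suc s) = k div 2^(Suc s))))"
proof -
  define j where "j = n - 1 - s"
  define K where "K = k div 2^(Suc s)"
  define \<kappa> where "\<kappa> = qbit k s"
  define L where "L = k mod 2^s"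
  have \<kappa>2: "\<kappa> < 2" unfolding \<kappa>_def by (rule qbit_lt2)
  have L2: "L < 2^s" unfolding L_def by simp
  have kd: "k = K * 2^(Suc s) + \<kappa> * 2^s + L" unfolding K_def \<kappa>_def L_def by (rule decomp)
  have kmod: "k mod 2^(Suc s) = \<kappa> * 2^s + L" unfolding \<kappa>_def L_def by (rule mod_decomp)
  have QL: "Q \<longleftrightarrow> \<kappa> = 0 \<and> L \<noteq> 0"
  proof -
    have "\<kappa> = 1 \<Longrightarrow> k mod 2^(Suc s) \<noteq> 0" using kmod by simp
    thus ?thesis unfolding Qdef \<kappa>_def[symmetric] using kmod qbit01[of k s] \<kappa>_def by auto
  qed
  define pidx where "pidx h \<gamma> = h * 2^(Suc s) + \<gamma> * 2^s + L" for h \<gamma> :: nat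
  define F where "F h = (if h < K \<or> (h = K \<and> (\<kappa> = 1 \<or> Q)) then 1\<^sub>m 2 else zer \<kappa> (v $ pidx h 0) (v $ pidx h 1))" for h
  have uF: "unitary2 (F h)" for h unfolding F_def using unitary2_one zer_unitary by auto
  have cF: "F h \<in> carrier_mat 2 2" for h using unitary2_carrier[OF uF] .
  have sj: "s + j < n" unfolding j_def using sn by simp
  obtain D E where D: "wf_circuit n D" "cnot_count D \<le> 2^j - 1" "\<forall>h<2^j. diagu (E h)"
    "circuit_mat n D = MX n s j (\<lambda>h. E h * F h)"
    using ucg[of s j n F, OF sj uF] by blast
  have key: "a div 2^(Suc s) mod 2^j = a div 2^(Suc s)" if "a < 2^n" for a :: nat
    unfolding j_def by (rule key_small[OF that sn])
  have hilt: "a div 2^(Suc s) < 2^j" if "a < 2^n" for a :: nat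
    using key[OF that] by (metis mod_less_divisor zero_less_numeral zero_less_power)
  have dE: "diagu (E (a div 2^(Suc s)))" if "a < 2^n" for a :: nat using D(3) hilt[OF that] by blast
  have ph: "\<exists>c. circuit_mat n D *\<^sub>v unit_vec (2^n) i = c \<cdot>\<^sub>v unit_vec (2^n) i \<and> cmod c = 1" if ik: "i < k" for i
  proof -
    have i2: "i < 2^n" using ik kn by simp
    define hi where "hi = i div 2^(Suc s)"
    have hK: "hi \<le> K" unfolding hi_def K_def using ik by (simp add: div_le_mono)
    have F1: "F hi = 1\<^sub>m 2"
    proof (cases "hi < K")
      case True then show ?thesis unfolding F_def by simp
    next
      case False
      hence hiK: "hi = K" using hK by simp
      have "\<kappa> = 1 \<or> Q"
      proof (rule ccontr)
        assume "\<not> (\<kappa> = 1 \<or> Q)"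
        hence "\<kappa> = 0" "L = 0" using QL \<kappa>2 by auto
        hence "k = K * 2^(Suc s)" using kd by simp
        also have "\<dots> \<le> i" using hiK unfolding hi_def by (metis div_mult_mod_eq le_add1)
        finally show False using ik by simp
      qed
      then show ?thesis unfolding F_def using hiK by simp
    qed
    let ?B = "\<lambda>a. E (a div 2^(Suc s) mod 2^j) * F (a div 2^(Suc s) mod 2^j)"
    have Bi: "?B i = E hi * 1\<^sub>m 2" using key[OF i2] F1 unfolding hi_def by simp
    have off: "?B i $$ (1 - qbit i s, qbit i s) = 0" unfolding Bi
      by (rule diag_off(1)[OF dE[OF i2, folded hi_def] qbit_lt2])
    have "circuit_mat n D *\<^sub>v unit_vec (2^n) i = ?B i $$ (qbit i s, qbit i s) \<cdot>\<^sub>v unit_vec (2^n) i"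
      unfolding D(4) MX_def by (rule GM_unit[OF i2 sn invar_key[where G="\<lambda>h. E h * F h" and t=s and j=j] off])
    moreover have "cmod (?B i $$ (qbit i s, qbit i s)) = 1" unfolding Bi
      by (rule diag_off(2)[OF dE[OF i2, folded hi_def] qbit_lt2])
    ultimately show ?thesis by blast
  qed
  have sp: "x mod 2^s = k mod 2^s \<and> k \<le> x \<and> (x mod 2^(Suc s) = k mod 2^(Suc s) \<or> (Q \<and> x div 2^(Suc s) = k div 2^(Suc s)))"
    if x2: "x < 2^n" and nz: "(circuit_mat n D *\<^sub>v v) $ x \<noteq> 0" for x
  proof -
    define hx where "hx = x div 2^(Suc s)"
    define \<beta> where "\<beta> = qbit x s"
    define lx where "lx = x mod 2^s"
    have \<beta>2: "\<beta> < 2" unfolding \<beta>_def by (rule qbit_lt2)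
    have lx2: "lx < 2^s" unfolding lx_def by simp
    have xd: "x = hx * 2^(Suc s) + \<beta> * 2^s + lx" unfolding hx_def \<beta>_def lx_def by (rule decomp)
    have y: "setb s \<gamma> x = hx * 2^(Suc s) + \<gamma> * 2^s + lx" for \<gamma> unfolding setb_expand hx_def lx_def ..
    have y2: "setb s \<gamma> x < 2^n" if "\<gamma> < 2" for \<gamma> by (rule setb_lt[OF x2 sn that])
    have ymod: "setb s \<gamma> x mod 2^s = lx" if "\<gamma> < 2" for \<gamma> unfolding lx_def by (rule setb_mod[OF that])
    define S where "S = F hx $$ (\<beta>, 0) * v $ setb s 0 x + F hx $$ (\<beta>, 1) * v $ setb s 1 x"
    have val: "(circuit_mat n D *\<^sub>v v) $ x = E hx $$ (\<beta>, \<beta>) * S"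
      unfolding D(4) S_def \<beta>_def
      apply (rule gm_vec_diag[where E=E and Fm=F and Z="F hx" and h=hx and j=j])
      using x2 sn v dE[OF x2] cF key unfolding hx_def by auto
    have S: "S \<noteq> 0" using nz val by auto
    have lxL: "lx = L"
    proof (rule ccontr)
      assume ne: "lx \<noteq> L"
      have "v $ setb s \<gamma> x = 0" if "\<gamma> < 2" for \<gamma>
        using sup y2[OF that] ymod[OF that] ne unfolding L_def by auto
      hence "S = 0" unfolding S_def by simp
      thus False using S by simp
    qed
    have hxK: "K \<le> hx"
    proof (rule ccontr)
      assume "\<not> K \<le> hx"
      hence lt: "hx < K" by simp
      have "v $ setb s \<gamma> x = 0" if "\<gamma> < 2" for \<gamma>
      proof -
        have "setb s \<gamma> x < k" unfolding y kd using cmp_hi[OF lt that lx2] .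
        thus ?thesis using sup y2[OF that] by auto
      qed
      hence "S = 0" unfolding S_def by simp
      thus False using S by simp
    qed
    have xm: "x mod 2^(Suc s) = \<beta> * 2^s + lx" unfolding \<beta>_def lx_def by (rule mod_decomp)
    show ?thesis
    proof (cases "hx = K \<and> (\<kappa> = 1 \<or> Q)")
      case True
      hence F1: "F hx = 1\<^sub>m 2" unfolding F_def by auto
      have b01: "\<beta> = 0 \<or> \<beta> = 1" using \<beta>2 by linarith
      have "S = v $ setb s \<beta> x" unfolding S_def F1
        using one2_row[OF \<beta>2, of "v $ setb s 0 x" "v $ setb s 1 x"] b01 by auto
      hence "v $ x \<noteq> 0" using S unfolding \<beta>_def setb_self by simp
      hence kx: "k \<le> x" using sup x2 by auto
      have "x mod 2^(Suc s) = k mod 2^(Suc s) \<or> (Q \<and> hx = K)"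
      proof (cases Q)
        case True then show ?thesis using \<open>hx = K \<and> _\<close> by simp
      next
        case False
        hence k1: "\<kappa> = 1" using \<open>hx = K \<and> (\<kappa> = 1 \<or> Q)\<close> by simp
        have "\<beta> = 1"
        proof (rule ccontr)
          assume "\<beta> \<noteq> 1" hence "\<beta> = 0" using \<beta>2 by simp
          hence "x < k" using xd kd k1 lxL True by simp
          thus False using kx by simp
        qed
        then show ?thesis using xm kmod k1 lxL by simp
      qed
      then show ?thesis using kx lxL unfolding L_def lx_def hx_def K_def by simp
    next
      case False
      hence Fz: "F hx = zer \<kappa> (v $ pidx hx 0) (v $ pidx hx 1)" unfolding F_def using hxK by auto
      have pid: "pidx hx \<gamma> = setb s \<gamma> x" for \<gamma> unfolding pidx_def y lxL ..
      have b: "\<beta> = \<kappa>"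
      proof (rule ccontr)
        assume "\<beta> \<noteq> \<kappa>"
        hence "\<beta> = 1 - \<kappa>" using \<beta>2 \<kappa>2 by linarith
        hence "S = 0" unfolding S_def Fz pid using zer_row[OF \<kappa>2] by simp
        thus False using S by simp
      qed
      have m: "x mod 2^(Suc s) = k mod 2^(Suc s)" using xm kmod b lxL by simp
      have kx: "k \<le> x"
      proof (cases "hx = K")
        case True then show ?thesis using xd kd b lxL by simp
      next
        case False
        hence "K < hx" using hxK by simp
        hence "k < x" unfolding kd xd using cmp_hi[OF _ \<kappa>2 L2] by blast
        thus ?thesis by simp
      qed
      show ?thesis using m kx lxL unfolding L_def lx_def by simp
    qed
  qed
  show ?thesis using D(1) D(2) ph sp unfolding j_def by blast
qed


lemma setb_sim_eq: "sim t a b \<Longrightarrow> setb t \<gamma> a = setb t \<gamma> b"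
  unfolding sim_def setb_def by simp

lemma stepQ:
  fixes n k s :: nat and w :: "complex vec"
  assumes sn: "s < n" and kn: "k < 2^n" and w: "w \<in> carrier_vec (2^n)" and cu: "sufficient_CU n N"
    and k0: "qbit k s = 0"
    and sup: "\<forall>x<2^n. w $ x \<noteq> 0 \<longrightarrow> x mod 2^s = k mod 2^s \<and> k \<le> x \<and>
         (x mod 2^(Suc s) = k mod 2^(Suc s) \<or> x div 2^(Suc s) = k div 2^(Suc s))"
  shows "\<exists>D. wf_circuit n D \<and> cnot_count D \<le> N \<and>
     (\<forall>i<k. circuit_mat n D *\<^sub>v unit_vec (2^n) i = 1 \<cdot>\<^sub>v unit_vec (2^n) i) \<and>
     (\<forall>x<2^n. (circuit_mat n D *\<^sub>v w) $ x \<noteq> 0 \<longrightarrow> x mod 2^(Suc s) = k mod 2^(Suc s) \<and> k \<le> x)"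
proof -
  have s0: "setb s 0 k = k" using setb_self[of s k] k0 by simp
  have s1: "k < setb s 1 k"
  proof -
    have "k = k div 2^(Suc s) * 2^(Suc s) + 0 * 2^s + k mod 2^s" using decomp[of k s] k0 by simp
    moreover have "(0::nat) < 2^s" by simp
    ultimately show ?thesis unfolding setb_def by linarith
  qed
  define U where "U = Z0 (w $ k) (w $ setb s 1 k)"
  have uU: "unitary2 U" unfolding U_def using Z0_props by blast
  have cU: "U \<in> carrier_mat 2 2" by (rule unitary2_carrier[OF uU])
  obtain D where D: "wf_circuit n D" "circuit_mat n D = controlled_gate n s k U" "cnot_count D \<le> N"
    using cu sn kn uU unfolding sufficient_CU_def decomposable_with_def by blast
  define B where "B a = (if sim s a k then U else 1\<^sub>m 2)" for a
  have DB: "circuit_mat n D = GM n s B" unfolding D(2) B_def by (rule gate_ctrl[OF kn])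
  have invB: "invar s B" unfolding invar_def B_def using sim_sym sim_trans by metis
  have nsim: "\<not> sim s i k" if "i < k" for i
  proof
    assume "sim s i k"
    hence "i = setb s (qbit i s) k" using sim_eq_setb sim_sym by blast
    moreover have "qbit i s = 0 \<or> qbit i s = 1" by (rule qbit01)
    ultimately show False using that s0 s1 by auto
  qed
  have ph: "circuit_mat n D *\<^sub>v unit_vec (2^n) i = 1 \<cdot>\<^sub>v unit_vec (2^n) i" if ik: "i < k" for i
  proof -
    have i2: "i < 2^n" using ik kn by simp
    have Bi: "B i = 1\<^sub>m 2" unfolding B_def using nsim[OF ik] by simp
    have off: "B i $$ (1 - qbit i s, qbit i s) = 0" unfolding Bi using qbit01[of i s] by auto
    have "circuit_mat n D *\<^sub>v unit_vec (2^n) i = B i $$ (qbit i s, qbit i s) \<cdot>\<^sub>v unit_vec (2^n) i"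
      unfolding DB by (rule GM_unit[OF i2 sn invB off])
    thus ?thesis unfolding Bi using qbit_lt2[of i s] by simp
  qed
  have sp: "x mod 2^(Suc s) = k mod 2^(Suc s) \<and> k \<le> x"
    if x2: "x < 2^n" and nz: "(circuit_mat n D *\<^sub>v w) $ x \<noteq> 0" for x
  proof -
    have val: "(circuit_mat n D *\<^sub>v w) $ x = B x $$ (qbit x s, 0) * w $ setb s 0 x + B x $$ (qbit x s, 1) * w $ setb s 1 x"
      unfolding DB by (rule GM_mult_vec[OF x2 sn w])
    show ?thesis
    proof (cases "sim s x k")
      case True
      have e: "setb s \<gamma> x = setb s \<gamma> k" for \<gamma> by (rule setb_sim_eq[OF True])
      have "qbit x s = 0"
      proof (rule ccontr)
        assume "qbit x s \<noteq> 0" hence q1: "qbit x s = 1" using qbit01[of x s] by simp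
        have "(circuit_mat n D *\<^sub>v w) $ x = U $$ (1, 0) * w $ k + U $$ (1,1) * w $ setb s 1 k"
          using val True q1 e s0 unfolding B_def by simp
        also have "\<dots> = 0" unfolding U_def using Z0_props by blast
        finally show False using nz by simp
      qed
      hence "x = k" using sim_eq_setb[OF sim_sym[OF True]] s0 by simp
      then show ?thesis by simp
    next
      case False
      have "(circuit_mat n D *\<^sub>v w) $ x = w $ setb s (qbit x s) x"
        using val False qbit01[of x s] unfolding B_def by (auto simp: one2)
      hence "w $ x \<noteq> 0" using nz setb_self by simp
      hence H: "x mod 2^s = k mod 2^s \<and> k \<le> x \<and> (x mod 2^(Suc s) = k mod 2^(Suc s) \<or> x div 2^(Suc s) = k div 2^(Suc s))"
        using sup x2 by blast
      have "x div 2^(Suc s) \<noteq> k div 2^(Suc s)" using False H unfolding sim_def by blast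
      then show ?thesis using H by blast
    qed
  qed
  show ?thesis using D(1) D(3) ph sp by blast
qed


lemma sum_pow_aux: "(\<Sum>s<n. (2::nat)^s - 1) = 2^n - n - 1"
proof (induction n)
  case 0 then show ?case by simp
next
  case (Suc n)
  have "Suc n \<le> 2^n" by (rule Suc_leI[OF less_exp])
  then show ?case using Suc by (simp add: power_Suc)
qed

lemma sum_pow: "(\<Sum>s<n. (2::nat)^(n-1-s) - 1) = 2^n - n - 1"
proof -
  have "(\<Sum>s<n. (2::nat)^(n-1-s) - 1) = (\<Sum>s<n. (\<lambda>i. (2::nat)^i - 1) (n - Suc s))" by simp
  also have "\<dots> = (\<Sum>s<n. (2::nat)^s - 1)" by (rule sum.nat_diff_reindex)
  finally show ?thesis using sum_pow_aux by simp
qed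

lemma unit_exp: "cmod z = 1 \<Longrightarrow> exp (\<i> * complex_of_real (Arg z)) = z"
proof -
  assume z: "cmod z = 1"
  hence "z \<noteq> 0" by auto
  hence "cis (Arg z) = sgn z" by (rule cis_Arg)
  also have "sgn z = z" using z by (simp add: sgn_div_norm)
  finally show ?thesis by (simp add: cis_conv_exp)
qed

theorem lemma13:
  fixes n k N :: nat and psi :: "complex vec"
  assumes "n \<ge> 2"
    and "1 \<le> k" and "k \<le> 2 ^ n - 1"
    and "psi \<in> carrier_vec (2 ^ n)" and "psi \<bullet>c psi = 1"
    and "\<forall>i < k. psi $ i = 0"
    and "sufficient_CU n N"
  shows "\<exists>C \<phi>. wf_circuit n C
           \<and> cnot_count C \<le> (2 ^ n - n - 1) + Qk k n * N
           \<and> (\<forall>i < k. circuit_mat n C *\<^sub>v unit_vec (2 ^ n) i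
                         = exp (\<i> * complex_of_real (\<phi> i)) \<cdot>\<^sub>v unit_vec (2 ^ n) i)
           \<and> circuit_mat n C *\<^sub>v psi = exp (\<i> * complex_of_real (\<phi> k)) \<cdot>\<^sub>v unit_vec (2 ^ n) k"
proof -
  have pos: "(0::nat) < 2^n" by simp
  have kn: "k < 2^n" using assms(3) pos by linarith
  have psi: "psi \<in> carrier_vec (2^n)" by (rule assms(4))
  define Qc where "Qc s \<longleftrightarrow> qbit k s = 0 \<and> k mod 2^(Suc s) \<noteq> 0" for s
  have inv: "\<exists>C \<mu>. wf_circuit n C \<and> cnot_count C \<le> (\<Sum>s'<s. 2^(n-1-s') - 1) + card {s'\<in>{0..<s}. Qc s'} * N \<and>
      (\<forall>i<k. circuit_mat n C *\<^sub>v unit_vec (2^n) i = \<mu> i \<cdot>\<^sub>v unit_vec (2^n) i \<and> cmod (\<mu> i) = 1) \<and>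
      (\<forall>x<2^n. (circuit_mat n C *\<^sub>v psi) $ x \<noteq> 0 \<longrightarrow> x mod 2^s = k mod 2^s \<and> k \<le> x)"
    if "s \<le> n" for s
    using that
  proof (induction s)
    case 0
    have w: "wf_circuit n []" unfolding wf_circuit_def by simp
    have c: "cnot_count [] \<le> (\<Sum>s'<0. 2^(n-1-s') - 1) + card {s'\<in>{0..<0}. Qc s'} * N" unfolding cnot_count_def by simp
    have e: "\<forall>i<k. circuit_mat n [] *\<^sub>v unit_vec (2^n) i = 1 \<cdot>\<^sub>v unit_vec (2^n) i \<and> cmod (1::complex) = 1"
      by simp
    have s: "\<forall>x<2^n. (circuit_mat n [] *\<^sub>v psi) $ x \<noteq> 0 \<longrightarrow> x mod 2^0 = k mod 2^0 \<and> k \<le> x"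
      using psi assms(6) by (auto simp: not_less[symmetric])
    show ?case
      apply (rule exI[of _ "[]"], rule exI[of _ "\<lambda>_. 1"])
      using w c e s by blast
  next
    case (Suc s)
    have sn: "s < n" using Suc.prems by simp
    obtain C \<mu> where C: "wf_circuit n C" "cnot_count C \<le> (\<Sum>s'<s. 2^(n-1-s') - 1) + card {s'\<in>{0..<s}. Qc s'} * N"
      "\<forall>i<k. circuit_mat n C *\<^sub>v unit_vec (2^n) i = \<mu> i \<cdot>\<^sub>v unit_vec (2^n) i \<and> cmod (\<mu> i) = 1"
      "\<forall>x<2^n. (circuit_mat n C *\<^sub>v psi) $ x \<noteq> 0 \<longrightarrow> x mod 2^s = k mod 2^s \<and> k \<le> x"
      using Suc.IH Suc.prems by auto
    define v where "v = circuit_mat n C *\<^sub>v psi"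
    have vc: "v \<in> carrier_vec (2^n)" unfolding v_def by (rule mult_mat_vec_carrier[OF circuit_carrier psi])
    obtain DM where DM: "wf_circuit n DM" "cnot_count DM \<le> 2^(n-1-s) - 1"
      "\<forall>i<k. \<exists>c. circuit_mat n DM *\<^sub>v unit_vec (2^n) i = c \<cdot>\<^sub>v unit_vec (2^n) i \<and> cmod c = 1"
      "\<forall>x<2^n. (circuit_mat n DM *\<^sub>v v) $ x \<noteq> 0 \<longrightarrow> x mod 2^s = k mod 2^s \<and> k \<le> x \<and>
         (x mod 2^(Suc s) = k mod 2^(Suc s) \<or> (Qc s \<and> x div 2^(Suc s) = k div 2^(Suc s)))"
      using stepM[OF sn kn vc _ , of "Qc s"] C(4) unfolding v_def Qc_def by blast
    obtain cM where cM: "\<forall>i\<in>{..<k}. circuit_mat n DM *\<^sub>v unit_vec (2^n) i = cM i \<cdot>\<^sub>v unit_vec (2^n) i \<and> cmod (cM i) = 1"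
      using bchoice[of "{..<k}" "\<lambda>i c. circuit_mat n DM *\<^sub>v unit_vec (2^n) i = c \<cdot>\<^sub>v unit_vec (2^n) i \<and> cmod c = 1"] DM(3)
      by auto
    define w where "w = circuit_mat n DM *\<^sub>v v"
    have wc: "w \<in> carrier_vec (2^n)" unfolding w_def by (rule mult_mat_vec_carrier[OF circuit_carrier vc])
    have CDM: "circuit_mat n (C @ DM) *\<^sub>v x = circuit_mat n DM *\<^sub>v (circuit_mat n C *\<^sub>v x)"
      if "x \<in> carrier_vec (2^n)" for x
      unfolding circuit_append using that by (simp add: assoc_mult_mat_vec[of _ "2^n" "2^n" _ "2^n"])
    have ph1: "circuit_mat n (C @ DM) *\<^sub>v unit_vec (2^n) i = (\<mu> i * cM i) \<cdot>\<^sub>v unit_vec (2^n) i \<and> cmod (\<mu> i * cM i) = 1"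
      if "i < k" for i
    proof -
      have "circuit_mat n (C @ DM) *\<^sub>v unit_vec (2^n) i = circuit_mat n DM *\<^sub>v (\<mu> i \<cdot>\<^sub>v unit_vec (2^n) i)"
        unfolding CDM[OF unit_vec_carrier] using C(3) that by simp
      also have "\<dots> = \<mu> i \<cdot>\<^sub>v (circuit_mat n DM *\<^sub>v unit_vec (2^n) i)"
        by (rule mult_mat_vec[OF circuit_carrier unit_vec_carrier])
      also have "\<dots> = (\<mu> i * cM i) \<cdot>\<^sub>v unit_vec (2^n) i" using cM that by (simp add: smult_smult_assoc)
      finally show ?thesis using C(3) cM that by (simp add: norm_mult)
    qed
    have cnt_eq: "(\<Sum>s'<Suc s. 2^(n-1-s') - 1) = (\<Sum>s'<s. 2^(n-1-s') - 1) + (2^(n-1-s) - (1::nat))" by simp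
    show ?case
    proof (cases "Qc s")
      case True
      have k0: "qbit k s = 0" using True unfolding Qc_def by simp
      have supw: "\<forall>x<2^n. w $ x \<noteq> 0 \<longrightarrow> x mod 2^s = k mod 2^s \<and> k \<le> x \<and>
         (x mod 2^(Suc s) = k mod 2^(Suc s) \<or> x div 2^(Suc s) = k div 2^(Suc s))"
        using DM(4) unfolding w_def by blast
      obtain DQ where DQ: "wf_circuit n DQ" "cnot_count DQ \<le> N"
        "\<forall>i<k. circuit_mat n DQ *\<^sub>v unit_vec (2^n) i = 1 \<cdot>\<^sub>v unit_vec (2^n) i"
        "\<forall>x<2^n. (circuit_mat n DQ *\<^sub>v w) $ x \<noteq> 0 \<longrightarrow> x mod 2^(Suc s) = k mod 2^(Suc s) \<and> k \<le> x"
        using stepQ[OF sn kn wc assms(7) k0 supw] by blast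
      define C' where "C' = (C @ DM) @ DQ"
      have CC: "circuit_mat n C' *\<^sub>v x = circuit_mat n DQ *\<^sub>v (circuit_mat n (C @ DM) *\<^sub>v x)"
        if "x \<in> carrier_vec (2^n)" for x
        unfolding C'_def circuit_append[of n "C @ DM" DQ] using that
        by (simp add: assoc_mult_mat_vec[of _ "2^n" "2^n" _ "2^n"])
      have wf': "wf_circuit n C'" unfolding C'_def using C(1) DM(1) DQ(1) by simp
      have card': "card {s'\<in>{0..<Suc s}. Qc s'} = card {s'\<in>{0..<s}. Qc s'} + 1"
      proof -
        have "{s'\<in>{0..<Suc s}. Qc s'} = insert s {s'\<in>{0..<s}. Qc s'}" using True by auto
        thus ?thesis by simp
      qed
      have cnt': "cnot_count C' \<le> (\<Sum>s'<Suc s. 2^(n-1-s') - 1) + card {s'\<in>{0..<Suc s}. Qc s'} * N"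
      proof -
        have cc: "cnot_count C' = cnot_count C + cnot_count DM + cnot_count DQ" unfolding C'_def by simp
        have e: "(card {s'\<in>{0..<s}. Qc s'} + 1) * N = card {s'\<in>{0..<s}. Qc s'} * N + N" by (simp add: algebra_simps)
        show ?thesis unfolding cnt_eq card' using C(2) DM(2) DQ(2) cc e by linarith
      qed
      have ph': "\<forall>i<k. circuit_mat n C' *\<^sub>v unit_vec (2^n) i = (\<mu> i * cM i) \<cdot>\<^sub>v unit_vec (2^n) i \<and> cmod (\<mu> i * cM i) = 1"
      proof (intro allI impI)
        fix i assume ik: "i < k"
        have "circuit_mat n C' *\<^sub>v unit_vec (2^n) i = circuit_mat n DQ *\<^sub>v ((\<mu> i * cM i) \<cdot>\<^sub>v unit_vec (2^n) i)"
          unfolding CC[OF unit_vec_carrier] using ph1[OF ik] by simp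
        also have "\<dots> = (\<mu> i * cM i) \<cdot>\<^sub>v (circuit_mat n DQ *\<^sub>v unit_vec (2^n) i)"
          by (rule mult_mat_vec[OF circuit_carrier unit_vec_carrier])
        also have "\<dots> = (\<mu> i * cM i) \<cdot>\<^sub>v unit_vec (2^n) i" using DQ(3) ik by simp
        finally show "circuit_mat n C' *\<^sub>v unit_vec (2^n) i = (\<mu> i * cM i) \<cdot>\<^sub>v unit_vec (2^n) i \<and> cmod (\<mu> i * cM i) = 1"
          using ph1[OF ik] by simp
      qed
      have sp': "\<forall>x<2^n. (circuit_mat n C' *\<^sub>v psi) $ x \<noteq> 0 \<longrightarrow> x mod 2^(Suc s) = k mod 2^(Suc s) \<and> k \<le> x"
        using DQ(4) unfolding CC[OF psi] CDM[OF psi] w_def v_def by blast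
      show ?thesis
        apply (rule exI[of _ C'], rule exI[of _ "\<lambda>i. \<mu> i * cM i"])
        using wf' cnt' ph' sp' by blast
    next
      case False
      define C' where "C' = C @ DM"
      have wf': "wf_circuit n C'" unfolding C'_def using C(1) DM(1) by simp
      have card': "card {s'\<in>{0..<Suc s}. Qc s'} = card {s'\<in>{0..<s}. Qc s'}"
      proof -
        have "{s'\<in>{0..<Suc s}. Qc s'} = {s'\<in>{0..<s}. Qc s'}" using False less_Suc_eq by auto
        thus ?thesis by simp
      qed
      have cnt': "cnot_count C' \<le> (\<Sum>s'<Suc s. 2^(n-1-s') - 1) + card {s'\<in>{0..<Suc s}. Qc s'} * N"
      proof -
        have cc: "cnot_count C' = cnot_count C + cnot_count DM" unfolding C'_def by simp
        show ?thesis unfolding cnt_eq card' using C(2) DM(2) cc by linarith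
      qed
      have ph': "\<forall>i<k. circuit_mat n C' *\<^sub>v unit_vec (2^n) i = (\<mu> i * cM i) \<cdot>\<^sub>v unit_vec (2^n) i \<and> cmod (\<mu> i * cM i) = 1"
        using ph1 unfolding C'_def by blast
      have sp': "\<forall>x<2^n. (circuit_mat n C' *\<^sub>v psi) $ x \<noteq> 0 \<longrightarrow> x mod 2^(Suc s) = k mod 2^(Suc s) \<and> k \<le> x"
        using DM(4) False unfolding C'_def CDM[OF psi] v_def by blast
      show ?thesis
        apply (rule exI[of _ C'], rule exI[of _ "\<lambda>i. \<mu> i * cM i"])
        using wf' cnt' ph' sp' by blast
    qed
  qed
  obtain C \<mu> where C: "wf_circuit n C" "cnot_count C \<le> (\<Sum>s'<n. 2^(n-1-s') - 1) + card {s'\<in>{0..<n}. Qc s'} * N"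
      "\<forall>i<k. circuit_mat n C *\<^sub>v unit_vec (2^n) i = \<mu> i \<cdot>\<^sub>v unit_vec (2^n) i \<and> cmod (\<mu> i) = 1"
      "\<forall>x<2^n. (circuit_mat n C *\<^sub>v psi) $ x \<noteq> 0 \<longrightarrow> x mod 2^n = k mod 2^n \<and> k \<le> x"
    using inv[of n] by auto
  define v where "v = circuit_mat n C *\<^sub>v psi"
  have vc: "v \<in> carrier_vec (2^n)" unfolding v_def by (rule mult_mat_vec_carrier[OF circuit_carrier psi])
  have supk: "v $ x = 0" if "x < 2^n" "x \<noteq> k" for x
  proof (rule ccontr)
    assume "v $ x \<noteq> 0"
    hence "x mod 2^n = k mod 2^n" using C(4) that(1) unfolding v_def by blast
    hence "x = k" using that(1) kn by simp
    thus False using that(2) by simp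
  qed
  have vk: "v = v $ k \<cdot>\<^sub>v unit_vec (2^n) k"
  proof (rule eq_vecI)
    fix x assume "x < dim_vec (v $ k \<cdot>\<^sub>v unit_vec (2^n) k)"
    hence x: "x < 2^n" by simp
    show "v $ x = (v $ k \<cdot>\<^sub>v unit_vec (2^n) k) $ x"
      using x kn supk[OF x] by (cases "x = k") (auto simp: unit_vec_def)
  qed (use vc in simp)
  have "v \<bullet>c v = 1" unfolding v_def using circuit_np[OF C(1) psi] assms(5) by simp
  moreover have "v \<bullet>c v = v $ k * cnj (v $ k)"
  proof -
    have "v \<bullet>c v = (\<Sum>x\<in>{0..<2^n}. v $ x * cnj (v $ x))" using vc by (simp add: scalar_prod_def)
    also have "\<dots> = (\<Sum>x\<in>{0..<2^n}. if x = k then v $ k * cnj (v $ k) else 0)"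
      by (rule sum.cong) (auto simp: supk)
    also have "\<dots> = v $ k * cnj (v $ k)" using kn by simp
    finally show ?thesis .
  qed
  ultimately have "cnj (v $ k) * v $ k = 1" by (simp add: mult.commute)
  hence "complex_of_real ((cmod (v $ k))^2) = 1" unfolding cnj_z_z .
  hence "(cmod (v $ k))^2 = 1" by (rule iffD1[OF of_real_eq_1_iff])
  hence "(cmod (v $ k))^2 = 1^2" by simp
  hence vk1: "cmod (v $ k) = 1" by (rule power2_eq_imp_eq[OF _ norm_ge_zero]) simp
  define \<phi> where "\<phi> i = (if i < k then Arg (\<mu> i) else Arg (v $ k))" for i
  have e1: "\<forall>i<k. circuit_mat n C *\<^sub>v unit_vec (2^n) i = exp (\<i> * complex_of_real (\<phi> i)) \<cdot>\<^sub>v unit_vec (2^n) i"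
    using C(3) unit_exp unfolding \<phi>_def by simp
  have e2: "circuit_mat n C *\<^sub>v psi = exp (\<i> * complex_of_real (\<phi> k)) \<cdot>\<^sub>v unit_vec (2^n) k"
    unfolding \<phi>_def using vk vk1 unit_exp[OF vk1] unfolding v_def[symmetric] by simp
  have cnt: "cnot_count C \<le> (2 ^ n - n - 1) + Qk k n * N"
  proof -
    have "Qk k n = card {s'\<in>{0..<n}. Qc s'}" unfolding Qk_def Qc_def by simp
    thus ?thesis using C(2) sum_pow[of n] by simp
  qed
  show ?thesis
    apply (rule exI[of _ C], rule exI[of _ \<phi>])
    using C(1) cnt e1 e2 by blast
qed


end
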